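(* Let $E=\mathbb{C}/(\tau_1\mathbb{Z}+\mathbb{Z})$ and $F$ be complex elliptic curves and let $A=E\times F$ with the product polarisation of type $(1,4)$, i.e. the class of $\pi_E^*\mathcal{O}_E(1)\otimes\pi_F^*\mathcal{O}_F(4)$ (degree $1$ on $E$, degree $4$ on $F$), where $\pi_E,\pi_F$ are the projections. Among the symmetric (i.e. $(-1)_A$-invariant) curves in the linear systems of line bundles representing this polarisation, there are exactly four that pass through twelve $2$-torsion points of $A$ with odd multiplicity, and all of them are translates of $C_{E\times F}$ by $2$-torsion points of $E\times\{0\}$.
   Context: Write $F=\mathbb{C}/(\tau_2\mathbb{Z}+4\mathbb{Z})$ so that $A=\mathbb{C}^2/(Z\mathbb{Z}^2+\mathrm{diag}(1,4)\mathbb{Z}^2)$ with $Z=\mathrm{diag}(\tau_1,\tau_2)$. $C_{E\times F}$ denotes the zero locus in $A$ of $\theta_A=\theta\begin{bmatrix}3\omega\\0\end{bmatrix}(\cdot,Z)-\theta\begin{bmatrix}\omega\\0\end{bmatrix}(\cdot,Z)$, $\omega=(0,\tfrac14)$, where $\theta\begin{bmatrix}c_1\\c_2\end{bmatrix}(v,Z)=\sum_{l\in\mathbb{Z}^2}\exp\big(\pi i\,{}^t(l+c_1)Z(l+c_1)+2\pi i\,{}^t(l+c_1)(v+c_2)\big)$. *)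

theory Defs
  imports "HOL-Analysis.Analysis" "HOL-Library.Extended_Nat"
begin

text \<open>Points of C^2 are pairs of complex numbers.  The period matrix is
  Z = diag(tau1, tau2) and the polarisation matrix D = diag(1,4), so
  A = C^2 / (Z Z^2 + D Z^2).\<close>

definition theta_char ::
  "real \<times> real \<Rightarrow> real \<times> real \<Rightarrow> complex \<times> complex \<Rightarrow> complex \<Rightarrow> complex \<Rightarrow> complex" where
  "theta_char c1 c2 v tau1 tau2 =
     (\<Sum>\<^sub>\<infinity>l\<in>(UNIV :: (int \<times> int) set).
        let x1 = complex_of_real (of_int (fst l) + fst c1);
            x2 = complex_of_real (of_int (snd l) + snd c1)
        in exp (pi * \<i> * (x1 ^ 2 * tau1 + x2 ^ 2 * tau2)
                + 2 * pi * \<i> * (x1 * (fst v + complex_of_real (fst c2))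
                                 + x2 * (snd v + complex_of_real (snd c2)))))"

definition vmult :: "(complex \<times> complex \<Rightarrow> complex) \<Rightarrow> complex \<times> complex \<Rightarrow> enat" where
  "vmult f p = Sup {enat k | k. \<exists>C>0. \<forall>\<^sub>F h in nhds 0. norm (f (p + h)) \<le> C * norm h ^ k}"

definition odd_mult :: "enat \<Rightarrow> bool" where
  "odd_mult m \<longleftrightarrow> (\<exists>k. m = enat k \<and> odd k)"

text \<open>General section of the basic line bundle L_0 of type (1,4):
  sum_{j<4} a_j theta[(0,j/4);0](v,Z).\<close>
definition theta_section :: "complex \<Rightarrow> complex \<Rightarrow> (nat \<Rightarrow> complex) \<Rightarrow> complex \<times> complex \<Rightarrow> complex" where
  "theta_section tau1 tau2 a v = (\<Sum>j<4. a j * theta_char (0, real j / 4) (0, 0) v tau1 tau2)"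

text \<open>Divisors (curves) are represented by their multiplicity function on C^2
  (Lambda-periodic).  Every line bundle algebraically equivalent to L_0 is a
  translate t_x^* L_0, so the curves in linear systems representing the
  polarisation are the zero divisors of v -> s(v + x), s a nonzero section of L_0.\<close>
definition sym_curves :: "complex \<Rightarrow> complex \<Rightarrow> (complex \<times> complex \<Rightarrow> enat) set" where
  "sym_curves tau1 tau2 =
     {m. (\<exists>a x. (\<exists>j<4. a j \<noteq> 0) \<and> m = vmult (\<lambda>v. theta_section tau1 tau2 a (v + x)))
         \<and> (\<forall>p. m (- p) = m p)}"

definition two_torsion :: "complex \<Rightarrow> complex \<Rightarrow> (complex \<times> complex) set" where
  "two_torsion tau1 tau2 =
     {(of_nat a1 * tau1 / 2 + of_nat b1 / 2, of_nat a2 * tau2 / 2 + 2 * of_nat b2)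
      | a1 b1 a2 b2 :: nat. a1 < 2 \<and> b1 < 2 \<and> a2 < 2 \<and> b2 < 2}"

definition two_torsion_E :: "complex \<Rightarrow> (complex \<times> complex) set" where
  "two_torsion_E tau1 = {(of_nat a * tau1 / 2 + of_nat b / 2, 0) | a b :: nat. a < 2 \<and> b < 2}"

definition C_EF :: "complex \<Rightarrow> complex \<Rightarrow> complex \<times> complex \<Rightarrow> enat" where
  "C_EF tau1 tau2 = vmult (\<lambda>v. theta_char (0, 3/4) (0, 0) v tau1 tau2 - theta_char (0, 1/4) (0, 0) v tau1 tau2)"

end

theory Submission
  imports Defs "HOL-Complex_Analysis.Complex_Analysis"
begin

definition latt :: "real \<Rightarrow> complex \<Rightarrow> complex \<Rightarrow> bool" where
  "latt P \<tau> w \<longleftrightarrow> (\<exists>m n::int. w = of_int m * complex_of_real P + of_int n * \<tau>)"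

lemma per_int:
  fixes f :: "complex \<Rightarrow> 'a" and c :: complex
  assumes "\<And>w. f (w + c) = f w"
  shows "f (w + of_int k * c) = f w"
proof -
  have A: "f (w + of_nat n * c) = f w" for n w
  proof (induction n arbitrary: w)
    case (Suc n)
    have "f (w + of_nat (Suc n) * c) = f ((w + of_nat n * c) + c)" by (simp add: algebra_simps)
    then show ?case using assms Suc by simp
  qed simp
  show ?thesis
  proof (cases "k \<ge> 0")
    case True then show ?thesis using A[of w "nat k"] by simp
  next
    case False
    then have "w = (w + of_int k * c) + of_nat (nat (-k)) * c" by simp
    then show ?thesis using A[of "w + of_int k * c" "nat (-k)"] by metis
  qed
qed

lemma linepath_shift_integral:
  "contour_integral (linepath (p + d) (q + d)) L = contour_integral (linepath p q) (\<lambda>z. L (z + d))"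
proof -
  have "linepath (p + d) (q + d) t = linepath p q t + d" for t
    by (simp add: linepath_def algebra_simps scaleR_conv_of_real)
  then show ?thesis by (simp add: contour_integral_integral)
qed

lemma seg_line:
  assumes "Im p = y" "Im q = y"
  shows "closed_segment p q \<subseteq> {w. Im w = y}"
  using assms closed_segment_same_Im[of p q] by auto

lemma line_integral_step:
  fixes L :: "complex \<Rightarrow> complex"
  assumes cont: "continuous_on {w. Im w = Im u} L"
    and per: "\<And>w. L (w + complex_of_real P) = L w"
    and s: "0 \<le> s" "s \<le> P"
  shows "contour_integral (linepath (u + of_real s) (u + of_real s + of_real P)) L
       = contour_integral (linepath u (u + of_real P)) L"
proof -
  have c: "continuous_on (closed_segment p q) L" if "Im p = Im u" "Im q = Im u" for p q
    by (rule continuous_on_subset[OF cont seg_line]) (use that in auto)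
  have P: "P \<ge> 0" using s by simp
  have m1: "u + of_real s \<in> closed_segment u (u + of_real P)"
  proof (cases "P = 0")
    case True then show ?thesis using s by simp
  next
    case False
    then show ?thesis unfolding in_segment
      by (rule_tac x="s / P" in exI) (use s in \<open>auto simp: scaleR_conv_of_real field_simps\<close>)
  qed
  have m2: "u + of_real P \<in> closed_segment (u + of_real s) (u + of_real s + of_real P)"
  proof (cases "P = 0")
    case True then show ?thesis using s by simp
  next
    case False
    then show ?thesis unfolding in_segment
      by (rule_tac x="(P - s) / P" in exI) (use s in \<open>auto simp: scaleR_conv_of_real field_simps\<close>)
  qed
  have e1: "contour_integral (linepath u (u + of_real P)) L = contour_integral (linepath u (u + of_real s)) L
       + contour_integral (linepath (u + of_real s) (u + of_real P)) L"
    by (rule contour_integral_split_linepath[OF c m1]) auto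
  have e2: "contour_integral (linepath (u + of_real s) (u + of_real s + of_real P)) L
       = contour_integral (linepath (u + of_real s) (u + of_real P)) L
       + contour_integral (linepath (u + of_real P) (u + of_real s + of_real P)) L"
    by (rule contour_integral_split_linepath[OF c m2]) auto
  have e3: "contour_integral (linepath (u + of_real P) (u + of_real s + of_real P)) L
       = contour_integral (linepath u (u + of_real s)) L"
    using linepath_shift_integral[of u "of_real P" "u + of_real s" L] per
    by (simp add: algebra_simps)
  show ?thesis using e1 e2 e3 by simp
qed

lemma line_integral_shift:
  fixes L :: "complex \<Rightarrow> complex"
  assumes cont: "continuous_on {w. Im w = Im u} L"
    and per: "\<And>w. L (w + complex_of_real P) = L w" and P: "P > 0"
  shows "contour_integral (linepath (u + of_real s) (u + of_real s + of_real P)) L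
       = contour_integral (linepath u (u + of_real P)) L"
proof -
  define k where "k = floor (s / P)"
  define r where "r = s - of_int k * P"
  have r: "0 \<le> r" "r \<le> P"
  proof -
    have "of_int k \<le> s / P" "s / P < of_int k + 1" unfolding k_def by linarith+
    then have "of_int k * P \<le> s" "s < (of_int k + 1) * P" using P by (auto simp: field_simps)
    then show "0 \<le> r" "r \<le> P" unfolding r_def by (auto simp: algebra_simps)
  qed
  define u' where "u' = u + of_int k * of_real P"
  have "u + of_real s = u' + of_real r" unfolding u'_def r_def by simp
  then have "contour_integral (linepath (u + of_real s) (u + of_real s + of_real P)) L
       = contour_integral (linepath (u' + of_real r) (u' + of_real r + of_real P)) L" by simp
  also have "\<dots> = contour_integral (linepath u' (u' + of_real P)) L"
    by (rule line_integral_step) (use cont r per in \<open>auto simp: u'_def\<close>)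
  also have "\<dots> = contour_integral (linepath u (u + of_real P)) (\<lambda>z. L (z + of_int k * of_real P))"
    using linepath_shift_integral[of u "of_int k * of_real P" "u + of_real P" L]
    by (simp add: u'_def algebra_simps)
  also have "\<dots> = contour_integral (linepath u (u + of_real P)) L"
    using per_int[of L "of_real P", OF per] by simp
  finally show ?thesis .
qed

lemma rect_integral:
  fixes L :: "complex \<Rightarrow> complex" and U :: "complex set"
  assumes cont: "continuous_on U L"
    and line: "{w. Im w = Im a} \<subseteq> U"
    and img: "path_image (rectpath a (Complex (Re a + P) (Im a + Im \<tau>))) \<subseteq> U"
    and per: "\<And>w. L (w + complex_of_real P) = L w"
    and qp: "\<And>w. Im w = Im a \<Longrightarrow> L (w + \<tau>) = L w - c"
    and P: "P > 0" and tau: "Im \<tau> > 0"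
  shows "contour_integral (rectpath a (Complex (Re a + P) (Im a + Im \<tau>))) L = c * of_real P"
proof -
  define b where "b = Complex (Re a + P) (Im a + Im \<tau>)"
  define a2 where "a2 = Complex (Re b) (Im a)"
  define a4 where "a4 = Complex (Re a) (Im b)"
  have a2: "a2 = a + of_real P" and a4: "a4 = a + \<i> * of_real (Im \<tau>)"
    and b: "b = a + of_real P + \<i> * of_real (Im \<tau>)"
    by (auto simp: a2_def a4_def b_def complex_eq_iff)
  have rp: "rectpath a b = linepath a a2 +++ linepath a2 b +++ linepath b a4 +++ linepath a4 a"
    by (simp add: rectpath_def a2_def a4_def Let_def)
  have imgs: "closed_segment a a2 \<subseteq> U" "closed_segment a2 b \<subseteq> U" "closed_segment b a4 \<subseteq> U"
       "closed_segment a4 a \<subseteq> U"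
    using img unfolding b_def[symmetric] rp by (auto simp: path_image_join)
  have ci: "L contour_integrable_on linepath p q" if "closed_segment p q \<subseteq> U" for p q
    by (rule contour_integrable_continuous_linepath[OF continuous_on_subset[OF cont that]])
  have I: "contour_integral (rectpath a b) L = contour_integral (linepath a a2) L
     + contour_integral (linepath a2 b) L + contour_integral (linepath b a4) L
     + contour_integral (linepath a4 a) L"
    unfolding rp using ci[OF imgs(1)] ci[OF imgs(2)] ci[OF imgs(3)] ci[OF imgs(4)]
    by (simp add: add_ac)
  have I2: "contour_integral (linepath a2 b) L = contour_integral (linepath a a4) L"
    using linepath_shift_integral[of a "of_real P" a4 L] per by (simp add: a2 a4 b algebra_simps)
  have I4: "contour_integral (linepath a4 a) L = - contour_integral (linepath a a4) L"
    using contour_integral_reversepath[of "linepath a a4" L] by simp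
  define a' where "a' = a4 - \<tau>"
  have Ima': "Im a' = Im a" by (simp add: a'_def a4)
  have a4': "a4 = a' + \<tau>" and b': "b = a' + of_real P + \<tau>" by (auto simp: a'_def a4 b)
  have "contour_integral (linepath a4 b) L = contour_integral (linepath a' (a' + of_real P)) (\<lambda>z. L (z + \<tau>))"
    using linepath_shift_integral[of a' \<tau> "a' + of_real P" L] by (simp add: a4' b')
  also have "\<dots> = contour_integral (linepath a' (a' + of_real P)) (\<lambda>z. L z - c)"
  proof (rule contour_integral_cong)
    fix x assume "x \<in> path_image (linepath a' (a' + of_real P))"
    then have "Im x = Im a" using seg_line[of a' "Im a'" "a' + of_real P"] Ima' by auto
    then show "L (x + \<tau>) = L x - c" by (rule qp)
  qed simp
  also have "\<dots> = contour_integral (linepath a' (a' + of_real P)) L - c * of_real P"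
  proof -
    have "closed_segment a' (a' + of_real P) \<subseteq> U"
      using seg_line[of a' "Im a'" "a' + of_real P"] Ima' line by auto
    then show ?thesis
      by (subst contour_integral_diff) (auto intro: ci contour_integrable_continuous_linepath)
  qed
  also have "contour_integral (linepath a' (a' + of_real P)) L = contour_integral (linepath a a2) L"
  proof -
    have "a' = a + of_real (Re a' - Re a)" using Ima' by (simp add: complex_eq_iff)
    then have "contour_integral (linepath a' (a' + of_real P)) L
       = contour_integral (linepath (a + of_real (Re a' - Re a)) (a + of_real (Re a' - Re a) + of_real P)) L"
      by simp
    also have "\<dots> = contour_integral (linepath a (a + of_real P)) L"
      by (rule line_integral_shift) (use continuous_on_subset[OF cont line] per P in auto)
    finally show ?thesis by (simp add: a2)
  qed
  finally have I3: "contour_integral (linepath b a4) L = - (contour_integral (linepath a a2) L - c * of_real P)"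
    using contour_integral_reversepath[of "linepath a4 b" L] by simp
  show ?thesis unfolding b_def[symmetric] I I2 I3 I4 by simp
qed

lemma zero_count:
  fixes f :: "complex \<Rightarrow> complex" and P :: real and \<tau> \<alpha> c :: complex and N :: nat
  assumes hol: "f holomorphic_on UNIV" and P: "P > 0" and tau: "Im \<tau> > 0"
    and per: "\<And>w. f (w + of_real P) = f w"
    and qp: "\<And>w. f (w + \<tau>) = exp (\<alpha> - c * w) * f w"
    and cN: "c * of_real P = 2 * pi * \<i> * of_nat N"
    and nz: "f w0 \<noteq> 0"
  shows "\<exists>Z. finite Z \<and> (\<forall>z\<in>Z. f z = 0) \<and> (\<forall>w. f w = 0 \<longrightarrow> (\<exists>z\<in>Z. latt P \<tau> (w - z)))
          \<and> (\<forall>z\<in>Z. \<forall>z'\<in>Z. latt P \<tau> (z - z') \<longrightarrow> z = z') \<and> (\<Sum>z\<in>Z. zorder f z) = int N"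
proof -
  have fin: "finite {z\<in>C. f z = 0}" if "compact C" for C
  proof (cases "f constant_on UNIV")
    case True then obtain k where "\<And>z. f z = k" by (auto simp: constant_on_def)
    then have "{z\<in>C. f z = 0} = {}" using nz by auto
    then show ?thesis by (metis finite.emptyI)
  next
    case False then show ?thesis
      by (intro holomorphic_compact_finite_zeros[OF hol]) (use that in auto)
  qed
  have zper: "f (w + of_int m * of_real P + of_int n * \<tau>) = 0 \<longleftrightarrow> f w = 0" for w m n
  proof -
    have "(f (w + \<tau>) = 0) = (f w = 0)" for w using qp by simp
    from per_int[of "\<lambda>w. f w = 0" \<tau>, OF this] have "(f (v + of_int n * \<tau>) = 0) = (f v = 0)" for v .
    moreover have "f (w + of_int m * of_real P) = f w" by (rule per_int[of f "of_real P", OF per])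
    ultimately show ?thesis by simp
  qed
  define h where "h = Im \<tau>"
  have h: "h > 0" using tau by (simp add: h_def)
  define K where "K = cbox (Complex (-1) (-1)) (Complex P h)"
  define Zs where "Zs = {z\<in>K. f z = 0}"
  have finZs: "finite Zs" using fin[of K] by (simp add: K_def Zs_def compact_cbox)
  obtain x0 where x0: "x0 \<in> {-1<..<0}" "x0 \<notin> Re ` Zs" "x0 \<notin> (\<lambda>z. Re z - P) ` Zs"
  proof -
    have "infinite ({-1<..<0::real} - (Re ` Zs \<union> (\<lambda>z. Re z - P) ` Zs))"
      by (rule Diff_infinite_finite) (use finZs in auto)
    then obtain x where "x \<in> {-1<..<0::real} - (Re ` Zs \<union> (\<lambda>z. Re z - P) ` Zs)"
      using infinite_imp_nonempty by blast
    then show ?thesis using that by blast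
  qed
  obtain y0 where y0: "y0 \<in> {-1<..<0}" "y0 \<notin> Im ` Zs" "y0 \<notin> (\<lambda>z. Im z - h) ` Zs"
  proof -
    have "infinite ({-1<..<0::real} - (Im ` Zs \<union> (\<lambda>z. Im z - h) ` Zs))"
      by (rule Diff_infinite_finite) (use finZs in auto)
    then obtain x where "x \<in> {-1<..<0::real} - (Im ` Zs \<union> (\<lambda>z. Im z - h) ` Zs)"
      using infinite_imp_nonempty by blast
    then show ?thesis using that by blast
  qed
  define a where "a = Complex x0 y0"
  define b where "b = Complex (Re a + P) (Im a + Im \<tau>)"
  have Rea: "Re a = x0" "Im a = y0" "Re b = x0 + P" "Im b = y0 + h" by (auto simp: a_def b_def h_def)
  have nzK: "f w \<noteq> 0" if "w \<in> K" and "Re w = x0 \<or> Re w = x0 + P \<or> Im w = y0 \<or> Im w = y0 + h" for w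
  proof
    assume "f w = 0"
    then have "w \<in> Zs" using that by (simp add: Zs_def)
    then have A: "Re w \<in> Re ` Zs" "Re w - P \<in> (\<lambda>z. Re z - P) ` Zs"
      "Im w \<in> Im ` Zs" "Im w - h \<in> (\<lambda>z. Im z - h) ` Zs" by auto
    from that(2) show False
    proof (elim disjE)
      assume "Re w = x0 + P" then have "x0 = Re w - P" by simp
      then show False using A(2) x0(3) by simp
    next
      assume "Im w = y0 + h" then have "y0 = Im w - h" by simp
      then show False using A(4) y0(3) by simp
    qed (use A x0 y0 in auto)
  qed
  have cboxK: "cbox a b \<subseteq> K"
    using x0 y0 by (auto simp: K_def in_cbox_complex_iff Rea)
  have bdry: "f w \<noteq> 0" if "w \<in> cbox a b - box a b" for w
  proof -
    have "w \<in> K" using that cboxK by auto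
    moreover have "Re w = x0 \<or> Re w = x0 + P \<or> Im w = y0 \<or> Im w = y0 + h"
      using that by (auto simp: in_cbox_complex_iff in_box_complex_iff Rea)
    ultimately show ?thesis by (rule nzK)
  qed
  have red: "\<exists>w'. latt P \<tau> (w - w') \<and> Re w' \<in> {x0..<x0+P} \<and> Im w' \<in> {y0..<y0+h}
     \<and> (\<exists>m n. w = w' + of_int m * of_real P + of_int n * \<tau>)" for w
  proof -
    define n where "n = floor ((Im w - y0) / h)"
    define w1 where "w1 = w - of_int n * \<tau>"
    define m where "m = floor ((Re w1 - x0) / P)"
    define w' where "w' = w1 - of_int m * of_real P"
    have "of_int n \<le> (Im w - y0) / h" "(Im w - y0) / h < of_int n + 1" unfolding n_def by linarith+
    then have n1: "of_int n * h \<le> Im w - y0" "Im w - y0 < (of_int n + 1) * h" using h by (auto simp: field_simps)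
    have "of_int m \<le> (Re w1 - x0) / P" "(Re w1 - x0) / P < of_int m + 1" unfolding m_def by linarith+
    then have m1: "of_int m * P \<le> Re w1 - x0" "Re w1 - x0 < (of_int m + 1) * P" using P by (auto simp: field_simps)
    have Imw': "Im w' = Im w - of_int n * h" by (simp add: w'_def w1_def h_def)
    have Rew': "Re w' = Re w1 - of_int m * P" by (simp add: w'_def)
    have eq: "w = w' + of_int m * of_real P + of_int n * \<tau>" by (simp add: w'_def w1_def)
    then have "latt P \<tau> (w - w')" unfolding latt_def by (auto simp: algebra_simps)
    moreover have "Re w' \<in> {x0..<x0+P}" "Im w' \<in> {y0..<y0+h}"
      using n1 m1 Imw' Rew' by (auto simp: algebra_simps)
    ultimately show ?thesis using eq by blast
  qed
  have line: "f w \<noteq> 0" if "Im w = y0" for w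
  proof -
    define k where "k = floor ((Re w - x0) / P)"
    define w' where "w' = w - of_int k * of_real P"
    have "of_int k \<le> (Re w - x0) / P" "(Re w - x0) / P < of_int k + 1" unfolding k_def by linarith+
    then have k1: "of_int k * P \<le> Re w - x0" "Re w - x0 < (of_int k + 1) * P" using P by (auto simp: field_simps)
    have "Re w' = Re w - of_int k * P" "Im w' = y0" using that by (auto simp: w'_def)
    then have "w' \<in> K" "Im w' = y0" using k1 x0 y0 h by (auto simp: K_def in_cbox_complex_iff algebra_simps)
    then have "f w' \<noteq> 0" using nzK by blast
    moreover have "w = w' + of_int k * of_real P + of_int 0 * \<tau>" by (simp add: w'_def)
    ultimately show ?thesis using zper by metis
  qed
  have hf: "(f has_field_derivative deriv f z) (at z)" for z
    using hol by (auto intro: holomorphic_derivI)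
  have dper: "deriv f (w + of_real P) = deriv f w" for w
  proof -
    have "((\<lambda>x. f (x + of_real P)) has_field_derivative deriv f (w + of_real P)) (at w)"
      using hf[of "w + of_real P"] DERIV_shift by blast
    then have "(f has_field_derivative deriv f (w + of_real P)) (at w)" using per by simp
    then show ?thesis using hf[of w] DERIV_unique by blast
  qed
  have dqp: "deriv f (w + \<tau>) = exp (\<alpha> - c * w) * (deriv f w - c * f w)" for w
  proof -
    have "((\<lambda>x. f (x + \<tau>)) has_field_derivative deriv f (w + \<tau>)) (at w)"
      using hf[of "w + \<tau>"] DERIV_shift by blast
    then have 1: "((\<lambda>x. exp (\<alpha> - c * x) * f x) has_field_derivative deriv f (w + \<tau>)) (at w)"
      using qp by simp
    have 2: "((\<lambda>x. exp (\<alpha> - c * x) * f x) has_field_derivative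
        exp (\<alpha> - c * w) * (- c) * f w + exp (\<alpha> - c * w) * deriv f w) (at w)"
      by (auto intro!: derivative_eq_intros hf)
    show ?thesis using DERIV_unique[OF 1 2] by (simp add: algebra_simps)
  qed
  define L where "L = (\<lambda>x. deriv f x * 1 / f x)"
  have Lper: "L (w + of_real P) = L w" for w using dper per by (simp add: L_def)
  have Lqp: "L (w + \<tau>) = L w - c" if "f w \<noteq> 0" for w
    using that unfolding L_def dqp qp by (simp add: field_simps)
  define U where "U = {w. f w \<noteq> 0}"
  have openU: "open U"
  proof -
    have "continuous_on UNIV f" using hol holomorphic_on_imp_continuous_on by blast
    then show ?thesis unfolding U_def by (rule open_Collect_neq) simp
  qed
  have holL: "L holomorphic_on U"
    unfolding L_def U_def
    by (intro holomorphic_intros holomorphic_deriv[OF hol] holomorphic_on_subset[OF hol]) (use openU in \<open>auto simp: U_def\<close>)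
  have contL: "continuous_on U L" using holL holomorphic_on_imp_continuous_on by blast
  have abP: "Re a \<le> Re b" "Im a \<le> Im b" using P h by (auto simp: Rea)
  have imgU: "path_image (rectpath a b) \<subseteq> U"
    using bdry path_image_rectpath_cbox_minus_box[OF abP] by (auto simp: U_def)
  have rect: "contour_integral (rectpath a b) L = c * of_real P"
    unfolding b_def
  proof (rule rect_integral[OF contL])
    show "{w. Im w = Im a} \<subseteq> U" using line by (auto simp: U_def Rea)
    show "path_image (rectpath a (Complex (Re a + P) (Im a + Im \<tau>))) \<subseteq> U" using imgU by (simp add: b_def)
    show "L (w + complex_of_real P) = L w" for w by (rule Lper)
    show "L (w + \<tau>) = L w - c" if "Im w = Im a" for w using that line Lqp by (simp add: Rea)
  qed (use P tau in auto)
  define S where "S = box (a - (1 + \<i>)) (b + (1 + \<i>))"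
  define pz where "pz = {w\<in>S. f w = 0 \<or> w \<in> {}}"
  have Ssub: "cbox a b \<subseteq> S" by (auto simp: S_def in_cbox_complex_iff in_box_complex_iff)
  have finpz: "finite pz"
  proof -
    have "pz \<subseteq> {z\<in>cbox (a - (1 + \<i>)) (b + (1 + \<i>)). f z = 0}"
      unfolding pz_def S_def using box_subset_cbox by auto
    then show ?thesis using fin[of "cbox (a - (1 + \<i>)) (b + (1 + \<i>))"] compact_cbox finite_subset by blast
  qed
  have AP: "contour_integral (rectpath a b) (\<lambda>x. deriv f x * (\<lambda>_. 1) x / f x) = 2 * pi * \<i> *
          (\<Sum>p\<in>pz. winding_number (rectpath a b) p * (\<lambda>_. 1) p * zorder f p)"
    unfolding pz_def
  proof (rule argument_principle[where f=f and S=S and poles="{}" and h="\<lambda>_. 1" and g="rectpath a b"])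
    show "open S" by (simp add: S_def open_box)
    show "connected S" by (simp add: S_def convex_connected)
    show "f holomorphic_on S - {}" using hol by (rule holomorphic_on_subset) auto
    show "(\<lambda>_. 1) holomorphic_on S" by simp
    show "valid_path (rectpath a b)" by simp
    show "pathfinish (rectpath a b) = pathstart (rectpath a b)" by simp
    show "path_image (rectpath a b) \<subseteq> S - {w \<in> S. f w = 0 \<or> w \<in> {}}"
      using imgU path_image_rectpath_subset_cbox[OF abP] Ssub by (auto simp: U_def)
    show "\<forall>z. z \<notin> S \<longrightarrow> winding_number (rectpath a b) z = 0"
      using Ssub winding_number_rectpath_outside[OF abP] by blast
    show "finite {w \<in> S. f w = 0 \<or> w \<in> {}}" using finpz by (simp add: pz_def)
  qed simp
  define Z where "Z = {z\<in>box a b. f z = 0}"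
  have Zpz: "Z \<subseteq> pz" using Ssub box_subset_cbox by (auto simp: Z_def pz_def)
  have sumeq: "(\<Sum>p\<in>pz. winding_number (rectpath a b) p * (\<lambda>_. 1) p * zorder f p) = (\<Sum>p\<in>Z. of_int (zorder f p))"
  proof (rule sum.mono_neutral_cong_right[OF finpz Zpz])
    show "\<forall>i\<in>pz - Z. winding_number (rectpath a b) i * 1 * of_int (zorder f i) = 0"
    proof
      fix p assume p: "p \<in> pz - Z"
      then have "f p = 0" "p \<notin> box a b" by (auto simp: pz_def Z_def)
      then have "p \<notin> cbox a b" using bdry by blast
      then show "winding_number (rectpath a b) p * 1 * of_int (zorder f p) = 0"
        using winding_number_rectpath_outside[OF abP] by simp
    qed
    show "winding_number (rectpath a b) x * 1 * of_int (zorder f x) = of_int (zorder f x)" if "x \<in> Z" for x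
      using that winding_number_rectpath by (simp add: Z_def)
  qed
  have "2 * pi * \<i> * (\<Sum>p\<in>Z. of_int (zorder f p)) = 2 * pi * \<i> * of_nat N"
  proof -
    have "contour_integral (rectpath a b) L = 2 * pi * \<i> * (\<Sum>p\<in>Z. of_int (zorder f p))"
      using AP sumeq unfolding L_def by simp
    then show ?thesis using rect cN by simp
  qed
  then have "(\<Sum>p\<in>Z. of_int (zorder f p)) = (of_nat N :: complex)" by simp
  then have sumZ: "(\<Sum>p\<in>Z. zorder f p) = int N"
    by (metis of_int_eq_iff of_int_of_nat_eq of_int_sum)
  have finZ: "finite Z" using finpz Zpz finite_subset by blast
  have cover: "\<forall>w. f w = 0 \<longrightarrow> (\<exists>z\<in>Z. latt P \<tau> (w - z))"
  proof (intro allI impI)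
    fix w assume fw: "f w = 0"
    obtain w' m n where w': "latt P \<tau> (w - w')" "Re w' \<in> {x0..<x0+P}" "Im w' \<in> {y0..<y0+h}"
      "w = w' + of_int m * of_real P + of_int n * \<tau>" using red[of w] by blast
    have "f w' = 0" using fw zper w'(4) by metis
    moreover have "w' \<in> cbox a b" using w' by (auto simp: in_cbox_complex_iff Rea)
    ultimately have "w' \<in> Z" using bdry by (auto simp: Z_def)
    then show "\<exists>z\<in>Z. latt P \<tau> (w - z)" using w' by blast
  qed
  have incong: "\<forall>z\<in>Z. \<forall>z'\<in>Z. latt P \<tau> (z - z') \<longrightarrow> z = z'"
  proof (intro ballI impI)
    fix z z' assume z: "z \<in> Z" "z' \<in> Z" and "latt P \<tau> (z - z')"
    then obtain m n :: int where mn: "z - z' = of_int m * of_real P + of_int n * \<tau>" by (auto simp: latt_def)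
    have bz: "Re z \<in> {x0<..<x0+P}" "Im z \<in> {y0<..<y0+h}" "Re z' \<in> {x0<..<x0+P}" "Im z' \<in> {y0<..<y0+h}"
      using z by (auto simp: Z_def in_box_complex_iff Rea)
    have "Im z - Im z' = of_int n * h" using arg_cong[OF mn, of Im] by (simp add: h_def)
    then have "\<bar>of_int n * h\<bar> < h" using bz by auto
    then have "\<bar>of_int n\<bar> < (1::real)" using h by (simp add: abs_mult)
    then have n0: "n = 0" by linarith
    have "Re z - Re z' = of_int m * P" using arg_cong[OF mn, of Re] n0 by simp
    then have "\<bar>of_int m * P\<bar> < P" using bz by auto
    then have "\<bar>of_int m\<bar> < (1::real)" using P by (simp add: abs_mult)
    then have "m = 0" by linarith
    then show "z = z'" using mn n0 by simp
  qed
  have "\<forall>z\<in>Z. f z = 0" by (simp add: Z_def)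
  then show ?thesis using finZ cover incong sumZ by blast
qed

definition tt :: "real \<Rightarrow> complex \<Rightarrow> complex \<Rightarrow> int \<Rightarrow> complex" where
  "tt c \<tau> z n = exp (pi * \<i> * (complex_of_real (of_int n + c))\<^sup>2 * \<tau> + 2 * pi * \<i> * complex_of_real (of_int n + c) * z)"

definition gg :: "real \<Rightarrow> complex \<Rightarrow> complex \<Rightarrow> nat \<Rightarrow> complex" where
  "gg c \<tau> z k = tt c \<tau> z (int k) + tt c \<tau> z (- int k - 1)"

definition th :: "real \<Rightarrow> complex \<Rightarrow> complex \<Rightarrow> complex" where
  "th c \<tau> z = suminf (gg c \<tau> z)"

lemma tt_norm: "norm (tt c \<tau> z n) = exp (- pi * (of_int n + c)\<^sup>2 * Im \<tau> - 2 * pi * (of_int n + c) * Im z)"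
proof -
  have "Re (pi * \<i> * (complex_of_real (of_int n + c))\<^sup>2 * \<tau> + 2 * pi * \<i> * complex_of_real (of_int n + c) * z)
      = - pi * (of_int n + c)\<^sup>2 * Im \<tau> - 2 * pi * (of_int n + c) * Im z"
    by (simp add: power2_eq_square algebra_simps)
  then show ?thesis by (simp add: tt_def)
qed

lemma quad_bound:
  fixes b K t :: real
  assumes "b > 0"
  shows "- pi * b * t\<^sup>2 + K * t \<le> K\<^sup>2 / (4 * pi * b)"
proof -
  have "0 \<le> (K - 2 * pi * b * t)\<^sup>2" by simp
  then have "0 \<le> K\<^sup>2 - 4 * pi * b * (K * t) + 4 * pi * b * (pi * b * t\<^sup>2)"
    by (simp add: power2_eq_square algebra_simps)
  then have "4 * pi * b * (K * t - pi * b * t\<^sup>2) \<le> K\<^sup>2" by (simp add: algebra_simps)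
  moreover have "4 * pi * b > 0" using assms by simp
  ultimately have "K * t - pi * b * t\<^sup>2 \<le> K\<^sup>2 / (4 * pi * b)"
    by (subst pos_le_divide_eq) (auto simp: mult.commute)
  then show ?thesis by simp
qed

lemma tt_bound:
  assumes tau: "Im \<tau> > 0" and R: "\<bar>Im z\<bar> \<le> R"
  shows "norm (tt c \<tau> z n) \<le> exp ((2 * pi * R + 1)\<^sup>2 / (4 * pi * Im \<tau>) + \<bar>c\<bar>) * exp (- \<bar>of_int n\<bar>)"
proof -
  define x where "x = of_int n + c"
  have "- pi * x\<^sup>2 * Im \<tau> - 2 * pi * x * Im z \<le> - pi * Im \<tau> * \<bar>x\<bar>\<^sup>2 + (2 * pi * R + 1) * \<bar>x\<bar> - \<bar>x\<bar>"
  proof -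
    have "- (2 * pi * x * Im z) \<le> 2 * pi * \<bar>x\<bar> * R"
    proof -
      have "\<bar>2 * pi * x * Im z\<bar> = 2 * pi * \<bar>x\<bar> * \<bar>Im z\<bar>" by (simp add: abs_mult)
      also have "\<dots> \<le> 2 * pi * \<bar>x\<bar> * R" using R by (intro mult_left_mono) auto
      finally show ?thesis by linarith
    qed
    then show ?thesis by (simp add: algebra_simps)
  qed
  also have "\<dots> \<le> (2 * pi * R + 1)\<^sup>2 / (4 * pi * Im \<tau>) - \<bar>x\<bar>"
    using quad_bound[OF tau, where K="2 * pi * R + 1" and t="\<bar>x\<bar>"] by simp
  also have "\<dots> \<le> (2 * pi * R + 1)\<^sup>2 / (4 * pi * Im \<tau>) + \<bar>c\<bar> - \<bar>of_int n\<bar>"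
    unfolding x_def by linarith
  finally have "- pi * x\<^sup>2 * Im \<tau> - 2 * pi * x * Im z \<le> (2 * pi * R + 1)\<^sup>2 / (4 * pi * Im \<tau>) + \<bar>c\<bar> - \<bar>of_int n\<bar>" .
  then show ?thesis unfolding tt_norm x_def[symmetric] by (simp add: exp_add[symmetric])
qed

lemma U1: "(UNIV :: int set) = range int \<union> range (\<lambda>k. - int k)"
proof -
  have "n \<in> range int \<union> range (\<lambda>k. - int k)" for n :: int
  proof (cases "n \<ge> 0")
    case True then have "n = int (nat n)" by simp
    then show ?thesis by blast
  next
    case False then have "n = - int (nat (-n))" by simp
    then show ?thesis by blast
  qed
  then show ?thesis by blast
qed

lemma U2: "(UNIV :: int set) = range int \<union> range (\<lambda>k. - int k - 1)"
proof -
  have "n \<in> range int \<union> range (\<lambda>k. - int k - 1)" for n :: int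
  proof (cases "n \<ge> 0")
    case True then have "n = int (nat n)" by simp
    then show ?thesis by blast
  next
    case False then have "n = - int (nat (-n-1)) - 1" by simp
    then show ?thesis by blast
  qed
  then show ?thesis by blast
qed

lemma summable_exp_neg_nat: "summable (\<lambda>k::nat. exp (- real k))"
proof -
  have "(\<lambda>k::nat. exp (- real k)) = (\<lambda>k. (exp (-1)) ^ k)"
    by (simp add: exp_of_nat_mult[symmetric])
  then show ?thesis by (simp add: summable_geometric)
qed

lemma summable_on_exp_neg_int: "(\<lambda>n::int. exp (- \<bar>real_of_int n\<bar>)) summable_on UNIV"
proof -
  have nat: "(\<lambda>k::nat. exp (- real k)) summable_on UNIV"
    using summable_exp_neg_nat by (intro norm_summable_imp_summable_on) simp
  have e1: "(\<lambda>n::int. exp (- \<bar>real_of_int n\<bar>)) \<circ> int = (\<lambda>k::nat. exp (- real k))"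
    by (rule ext) simp
  have e2: "(\<lambda>n::int. exp (- \<bar>real_of_int n\<bar>)) \<circ> (\<lambda>k. - int k) = (\<lambda>k::nat. exp (- real k))"
    by (rule ext) simp
  have i2: "inj (\<lambda>k::nat. - int k)" by (rule injI) simp
  have 1: "(\<lambda>n::int. exp (- \<bar>real_of_int n\<bar>)) summable_on range int"
  proof -
    have "(\<lambda>n::int. exp (- \<bar>real_of_int n\<bar>)) summable_on int ` UNIV \<longleftrightarrow> ((\<lambda>n::int. exp (- \<bar>real_of_int n\<bar>)) \<circ> int) summable_on UNIV"
      by (rule summable_on_reindex) (simp add: inj_on_def)
    then show ?thesis using nat e1 by simp
  qed
  have 2: "(\<lambda>n::int. exp (- \<bar>real_of_int n\<bar>)) summable_on range (\<lambda>k. - int k)"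
  proof -
    have "(\<lambda>n::int. exp (- \<bar>real_of_int n\<bar>)) summable_on (\<lambda>k. - int k) ` UNIV \<longleftrightarrow> ((\<lambda>n::int. exp (- \<bar>real_of_int n\<bar>)) \<circ> (\<lambda>k. - int k)) summable_on UNIV"
      by (rule summable_on_reindex) (simp add: inj_on_def)
    then show ?thesis using nat e2 by simp
  qed
  show ?thesis by (subst U1) (rule summable_on_union[OF 1 2])
qed

lemma tt_abs_summable:
  assumes "Im \<tau> > 0"
  shows "(\<lambda>n. norm (tt c \<tau> z n)) summable_on UNIV"
proof -
  define B where "B = exp ((2 * pi * \<bar>Im z\<bar> + 1)\<^sup>2 / (4 * pi * Im \<tau>) + \<bar>c\<bar>)"
  have "(\<lambda>n::int. B * exp (- \<bar>of_int n\<bar>)) summable_on UNIV"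
    using summable_on_exp_neg_int by (rule summable_on_cmult_right)
  moreover have "norm (tt c \<tau> z n) \<le> B * exp (- \<bar>of_int n\<bar>)" for n
    using tt_bound[OF assms, of z "\<bar>Im z\<bar>" c n] by (simp add: B_def)
  ultimately show ?thesis
    by (rule summable_on_comparison_test) simp_all
qed

lemma tt_summable: "Im \<tau> > 0 \<Longrightarrow> tt c \<tau> z summable_on UNIV"
  using tt_abs_summable abs_summable_summable by blast

lemma th_has_sum:
  assumes "Im \<tau> > 0"
  shows "(tt c \<tau> z has_sum th c \<tau> z) UNIV"
proof -
  have disj: "range int \<inter> range (\<lambda>k. - int k - 1) = {}" by auto
  have s1: "tt c \<tau> z summable_on range int" and s2: "tt c \<tau> z summable_on range (\<lambda>k. - int k - 1)"
    using tt_summable[OF assms] summable_on_subset_banach by blast+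
  have i2: "inj (\<lambda>k::nat. - int k - 1)" by (rule injI) simp
  have h1: "((\<lambda>k. tt c \<tau> z (int k)) has_sum infsum (tt c \<tau> z) (range int)) UNIV"
    using has_sum_reindex[of int UNIV "tt c \<tau> z"] has_sum_infsum[OF s1] by (simp add: o_def)
  have h2: "((\<lambda>k. tt c \<tau> z (- int k - 1)) has_sum infsum (tt c \<tau> z) (range (\<lambda>k. - int k - 1))) UNIV"
    using has_sum_reindex[OF i2, of "tt c \<tau> z"] has_sum_infsum[OF s2] by (simp add: o_def)
  have "gg c \<tau> z sums (infsum (tt c \<tau> z) (range int) + infsum (tt c \<tau> z) (range (\<lambda>k. - int k - 1)))"
    unfolding gg_def by (intro sums_add has_sum_imp_sums h1 h2)
  then have "th c \<tau> z = infsum (tt c \<tau> z) (range int) + infsum (tt c \<tau> z) (range (\<lambda>k. - int k - 1))"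
    by (simp add: th_def sums_iff)
  also have "\<dots> = infsum (tt c \<tau> z) UNIV"
    by (subst U2, rule infsum_Un_disjoint[symmetric, OF s1 s2 disj])
  finally show ?thesis using tt_summable[OF assms] by (simp add: has_sum_infsum)
qed

lemma th_infsum: "Im \<tau> > 0 \<Longrightarrow> th c \<tau> z = (\<Sum>\<^sub>\<infinity>n. tt c \<tau> z n)"
  using th_has_sum infsumI by metis

lemma tt_deriv: "((\<lambda>z. tt c \<tau> z n) has_field_derivative tt c \<tau> z n * (2 * pi * \<i> * complex_of_real (of_int n + c))) (at z)"
  unfolding tt_def by (auto intro!: derivative_eq_intros simp: algebra_simps)

lemma th_holo:
  assumes tau: "Im \<tau> > 0"
  shows "th c \<tau> holomorphic_on UNIV"
proof -
  define f' where "f' = (\<lambda>k z. tt c \<tau> z (int k) * (2 * pi * \<i> * complex_of_real (of_int (int k) + c))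
     + tt c \<tau> z (- int k - 1) * (2 * pi * \<i> * complex_of_real (of_int (- int k - 1) + c)))"
  have hfd: "\<And>n x. x \<in> UNIV \<Longrightarrow> ((\<lambda>z. gg c \<tau> z n) has_field_derivative f' n x) (at x)"
    unfolding gg_def f'_def by (intro derivative_intros tt_deriv)
  have to_g: "\<exists>d h. 0 < d \<and> summable h \<and> (\<forall>\<^sub>F n in sequentially. \<forall>y\<in>ball x d \<inter> UNIV. norm (gg c \<tau> y n) \<le> h n)" for x
  proof -
    define B where "B = exp ((2 * pi * (\<bar>Im x\<bar> + 1) + 1)\<^sup>2 / (4 * pi * Im \<tau>) + \<bar>c\<bar>)"
    have "norm (gg c \<tau> y n) \<le> 2 * B * exp (- real n)" if "y \<in> ball x 1" for y n
    proof -
      have "\<bar>Im y - Im x\<bar> \<le> norm (y - x)" using abs_Im_le_cmod[of "y - x"] by simp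
      also have "\<dots> < 1" using that by (simp add: dist_norm norm_minus_commute)
      finally have R: "\<bar>Im y\<bar> \<le> \<bar>Im x\<bar> + 1" by linarith
      have 1: "norm (tt c \<tau> y (int n)) \<le> B * exp (- real n)"
        using tt_bound[OF tau R, of c "int n"] by (simp add: B_def)
      have "norm (tt c \<tau> y (- int n - 1)) \<le> B * exp (- \<bar>real_of_int (- int n - 1)\<bar>)"
        using tt_bound[OF tau R, of c "- int n - 1"] by (simp add: B_def)
      also have "\<dots> \<le> B * exp (- real n)" by (simp add: B_def)
      finally have 2: "norm (tt c \<tau> y (- int n - 1)) \<le> B * exp (- real n)" .
      have "norm (gg c \<tau> y n) \<le> norm (tt c \<tau> y (int n)) + norm (tt c \<tau> y (- int n - 1))"
        unfolding gg_def by (rule norm_triangle_ineq)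
      then show ?thesis using 1 2 by simp
    qed
    moreover have "summable (\<lambda>n. 2 * B * exp (- real n))"
      using summable_exp_neg_nat by (rule summable_mult)
    ultimately show ?thesis by (intro exI[of _ 1] exI[of _ "\<lambda>n. 2 * B * exp (- real n)"]) auto
  qed
  obtain g g' where gg: "\<forall>x\<in>UNIV. ((\<lambda>n. gg c \<tau> x n) sums g x) \<and> ((\<lambda>n. f' n x) sums g' x) \<and> (g has_field_derivative g' x) (at x)"
    using series_and_derivative_comparison_local[OF open_UNIV hfd to_g] by blast
  have "g = th c \<tau>" using gg by (auto simp: th_def sums_iff fun_eq_iff)
  then show ?thesis using gg unfolding holomorphic_on_def field_differentiable_def
    by (metis UNIV_I has_field_derivative_at_within)
qed

lemma exp_2pi_int [simp]: "exp (2 * complex_of_real pi * \<i> * of_int n) = 1"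
  using exp_integer_2pi[of "of_int n"] by (simp add: mult_ac)

lemma exp_2pi_int': "exp (complex_of_real (2 * pi) * \<i> * of_int n) = 1"
  using exp_2pi_int[of n] by simp

lemma th_reindex:
  assumes "bij h"
  shows "(\<Sum>\<^sub>\<infinity>n. f (h n)) = (\<Sum>\<^sub>\<infinity>n::int. (f n :: complex))"
  using infsum_reindex_bij_betw[of h UNIV UNIV f] assms by simp

lemma bij_plus1: "bij (\<lambda>n::int. n + 1)"
  by (rule o_bij[of "\<lambda>n. n - 1"]) auto
lemma bij_minus1: "bij (\<lambda>n::int. n - 1)"
  by (rule o_bij[of "\<lambda>n. n + 1"]) auto
lemma bij_neg: "bij (\<lambda>n::int. - n)"
  by (rule o_bij[of "\<lambda>n. - n"]) auto

lemma tt_shift1: "tt c \<tau> (z + 1) n = exp (2 * pi * \<i> * of_real c) * tt c \<tau> z n"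
proof -
  have "tt c \<tau> (z + 1) n = exp (2 * pi * \<i> * of_int n) * (exp (2 * pi * \<i> * of_real c) * tt c \<tau> z n)"
    unfolding tt_def exp_add[symmetric] by (rule arg_cong[where f=exp]) (simp add: algebra_simps)
  then show ?thesis by (simp only: exp_2pi_int' mult_1_left)
qed

lemma th_shift1:
  assumes "Im \<tau> > 0"
  shows "th c \<tau> (z + 1) = exp (2 * pi * \<i> * of_real c) * th c \<tau> z"
  unfolding th_infsum[OF assms] tt_shift1 by (rule infsum_cmult_right') 

lemma tt_shift_tau: "tt c \<tau> (z + \<tau>) n = exp (- pi * \<i> * \<tau> - 2 * pi * \<i> * z) * tt c \<tau> z (n + 1)"
  unfolding tt_def exp_add[symmetric] by (rule arg_cong[where f=exp]) (simp add: algebra_simps power2_eq_square)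

lemma th_shift_tau:
  assumes "Im \<tau> > 0"
  shows "th c \<tau> (z + \<tau>) = exp (- pi * \<i> * \<tau> - 2 * pi * \<i> * z) * th c \<tau> z"
proof -
  have "th c \<tau> (z + \<tau>) = (\<Sum>\<^sub>\<infinity>n. exp (- pi * \<i> * \<tau> - 2 * pi * \<i> * z) * tt c \<tau> z (n + 1))"
    unfolding th_infsum[OF assms] tt_shift_tau ..
  also have "\<dots> = exp (- pi * \<i> * \<tau> - 2 * pi * \<i> * z) * (\<Sum>\<^sub>\<infinity>n. tt c \<tau> z (n + 1))"
    by (rule infsum_cmult_right')
  also have "(\<Sum>\<^sub>\<infinity>n. tt c \<tau> z (n + 1)) = (\<Sum>\<^sub>\<infinity>n. tt c \<tau> z n)"
    by (rule th_reindex[OF bij_plus1])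
  finally show ?thesis unfolding th_infsum[OF assms] .
qed

lemma th_neg:
  assumes "Im \<tau> > 0"
  shows "th c \<tau> (- z) = th (- c) \<tau> z"
proof -
  have "tt c \<tau> (- z) n = tt (- c) \<tau> z (- n)" for n
    unfolding tt_def by (rule arg_cong[where f=exp]) (simp add: algebra_simps power2_eq_square)
  then have "th c \<tau> (- z) = (\<Sum>\<^sub>\<infinity>n. tt (- c) \<tau> z (- n))" by (simp add: th_infsum[OF assms])
  also have "\<dots> = th (- c) \<tau> z" by (simp add: th_reindex[OF bij_neg] th_infsum[OF assms])
  finally show ?thesis .
qed

lemma th_c1:
  assumes "Im \<tau> > 0"
  shows "th (c + 1) \<tau> z = th c \<tau> z"
proof -
  have "tt (c + 1) \<tau> z n = tt c \<tau> z (n + 1)" for n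
    unfolding tt_def by (rule arg_cong[where f=exp]) (simp add: algebra_simps power2_eq_square)
  then have "th (c + 1) \<tau> z = (\<Sum>\<^sub>\<infinity>n. tt c \<tau> z (n + 1))" by (simp add: th_infsum[OF assms])
  also have "\<dots> = th c \<tau> z" by (simp add: th_reindex[OF bij_plus1] th_infsum[OF assms])
  finally show ?thesis .
qed

lemma exp_line_integral:
  fixes k P :: real
  assumes "k * P \<in> \<int>"
  shows "contour_integral (linepath 0 (of_real P)) (\<lambda>z. exp (2 * pi * \<i> * of_real k * z)) = (if k = 0 then of_real P else 0)"
proof (cases "k = 0")
  case True then show ?thesis by simp
next
  case False
  define F where "F = (\<lambda>z. exp (2 * pi * \<i> * of_real k * z) / (2 * pi * \<i> * of_real k))"
  have d: "(F has_field_derivative exp (2 * pi * \<i> * of_real k * z)) (at z within UNIV)" for z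
    unfolding F_def using False by (auto intro!: derivative_eq_intros)
  have "((\<lambda>z. exp (2 * pi * \<i> * of_real k * z)) has_contour_integral (F (pathfinish (linepath 0 (of_real P))) - F (pathstart (linepath 0 (of_real P))))) (linepath 0 (of_real P))"
    by (rule contour_integral_primitive[OF d]) auto
  moreover have "F (of_real P) - F 0 = 0"
  proof -
    obtain m where m: "k * P = of_int m" using assms Ints_cases by blast
    have "exp (2 * pi * \<i> * of_real k * of_real P) = exp (2 * pi * \<i> * of_int m)"
      by (rule arg_cong[where f=exp]) (metis m mult.assoc of_real_mult of_real_of_int_eq)
    then show ?thesis by (simp add: F_def exp_2pi_int)
  qed
  ultimately show ?thesis using False by (simp add: contour_integral_unique)
qed

lemma tt_exp_integral:
  fixes P :: nat and d :: real
  assumes "(c - d) * real P \<in> \<int>"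
  shows "contour_integral (linepath 0 (of_nat P)) (\<lambda>z. tt c \<tau> z n * exp (- 2 * pi * \<i> * of_real d * z))
     = (if of_int n + c = d then of_nat P * exp (pi * \<i> * (of_real d)\<^sup>2 * \<tau>) else 0)"
proof -
  define k where "k = of_int n + c - d"
  have e: "tt c \<tau> z n * exp (- 2 * pi * \<i> * of_real d * z)
      = exp (pi * \<i> * (complex_of_real (of_int n + c))\<^sup>2 * \<tau>) * exp (2 * pi * \<i> * of_real k * z)" for z
    unfolding tt_def exp_add[symmetric] k_def by (rule arg_cong[where f=exp]) (simp add: algebra_simps)
  have kP: "k * real P \<in> \<int>"
  proof -
    have "k * real P = of_int (n * int P) + (c - d) * real P" by (simp add: k_def algebra_simps)
    then show ?thesis using assms by (metis Ints_add Ints_of_int)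
  qed
  have ci: "(\<lambda>z. exp (2 * pi * \<i> * of_real k * z)) contour_integrable_on linepath 0 (of_nat P)"
    by (intro contour_integrable_continuous_linepath continuous_intros)
  have "contour_integral (linepath 0 (of_nat P)) (\<lambda>z. tt c \<tau> z n * exp (- 2 * pi * \<i> * of_real d * z))
     = exp (pi * \<i> * (complex_of_real (of_int n + c))\<^sup>2 * \<tau>) * contour_integral (linepath 0 (of_nat P)) (\<lambda>z. exp (2 * pi * \<i> * of_real k * z))"
    unfolding e by (rule contour_integral_lmul[OF ci])
  also have "contour_integral (linepath 0 (of_nat P)) (\<lambda>z. exp (2 * pi * \<i> * of_real k * z)) = (if k = 0 then of_nat P else 0)"
    using exp_line_integral[OF kP] by simp
  finally have "contour_integral (linepath 0 (of_nat P)) (\<lambda>z. tt c \<tau> z n * exp (- 2 * pi * \<i> * of_real d * z))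
    = exp (pi * \<i> * (complex_of_real (of_int n + c))\<^sup>2 * \<tau>) * (if k = 0 then of_nat P else 0)" .
  moreover have "(k = 0) = (of_int n + c = d)" by (auto simp: k_def)
  ultimately show ?thesis by (cases "of_int n + c = d") auto
qed

lemma gg_bound:
  assumes tau: "Im \<tau> > 0" and R: "\<bar>Im y\<bar> \<le> R"
  shows "norm (gg c \<tau> y n) \<le> 2 * exp ((2 * pi * R + 1)\<^sup>2 / (4 * pi * Im \<tau>) + \<bar>c\<bar>) * exp (- real n)"
proof -
  define B where "B = exp ((2 * pi * R + 1)\<^sup>2 / (4 * pi * Im \<tau>) + \<bar>c\<bar>)"
  have 1: "norm (tt c \<tau> y (int n)) \<le> B * exp (- real n)"
    using tt_bound[OF tau R, of c "int n"] by (simp add: B_def)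
  have "norm (tt c \<tau> y (- int n - 1)) \<le> B * exp (- \<bar>real_of_int (- int n - 1)\<bar>)"
    using tt_bound[OF tau R, of c "- int n - 1"] by (simp add: B_def)
  also have "\<dots> \<le> B * exp (- real n)" by (simp add: B_def)
  finally have 2: "norm (tt c \<tau> y (- int n - 1)) \<le> B * exp (- real n)" .
  have "norm (gg c \<tau> y n) \<le> norm (tt c \<tau> y (int n)) + norm (tt c \<tau> y (- int n - 1))"
    unfolding gg_def by (rule norm_triangle_ineq)
  then show ?thesis using 1 2 by (simp add: B_def)
qed

lemma gg_summable: "Im \<tau> > 0 \<Longrightarrow> summable (gg c \<tau> z)"
  by (rule summable_comparison_test[OF _ summable_mult[OF summable_exp_neg_nat]])
     (use gg_bound[of \<tau> z "\<bar>Im z\<bar>" c] in auto)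

lemma gg_cont: "continuous_on A (\<lambda>z. gg c \<tau> z k)"
  unfolding gg_def tt_def by (intro continuous_intros)

lemma th_coeff:
  fixes P :: nat and c d :: real
  assumes tau: "Im \<tau> > 0" and P: "P > 0" and cd: "(c - d) * real P \<in> \<int>"
  defines "I \<equiv> contour_integral (linepath 0 (of_nat P)) (\<lambda>z. th c \<tau> z * exp (- 2 * pi * \<i> * of_real d * z))"
  shows "(c = d \<longrightarrow> I = of_nat P * exp (pi * \<i> * (of_real d)\<^sup>2 * \<tau>)) \<and> (d - c \<notin> \<int> \<longrightarrow> I = 0)"
proof -
  define \<gamma> where "\<gamma> = linepath 0 (complex_of_nat P)"
  define E where "E = (\<lambda>z::complex. exp (- 2 * pi * \<i> * of_real d * z))"
  define F where "F = (\<lambda>k z. gg c \<tau> z k * E z)"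
  define B where "B = 2 * exp ((2 * pi * 0 + 1)\<^sup>2 / (4 * pi * Im \<tau>) + \<bar>c\<bar>)"
  have Im0: "Im z = 0" if "z \<in> path_image \<gamma>" for z
    using that seg_line[of 0 0 "complex_of_nat P"] by (auto simp: \<gamma>_def)
  have bnd: "norm (F k z) \<le> B * exp (- real k)" if "z \<in> path_image \<gamma>" for k z
  proof -
    have "norm (E z) = 1" using Im0[OF that] by (simp add: E_def norm_exp)
    moreover have "norm (gg c \<tau> z k) \<le> B * exp (- real k)"
      using gg_bound[OF tau, of z 0 c k] Im0[OF that] by (simp add: B_def)
    ultimately show ?thesis by (simp add: F_def norm_mult)
  qed
  have ul: "uniform_limit (path_image \<gamma>) (\<lambda>M z. \<Sum>k<M. F k z) (\<lambda>z. suminf (\<lambda>k. F k z)) sequentially"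
    by (rule Weierstrass_m_test[OF bnd summable_mult[OF summable_exp_neg_nat]])
  have lim: "(\<lambda>z. suminf (\<lambda>k. F k z)) = (\<lambda>z. th c \<tau> z * E z)"
    using gg_summable[OF tau] by (auto simp: F_def th_def suminf_mult2[symmetric] fun_eq_iff)
  have cF: "(F k) contour_integrable_on \<gamma>" for k
    unfolding F_def E_def \<gamma>_def
    by (intro contour_integrable_continuous_linepath continuous_intros gg_cont)
  have "((\<lambda>M. contour_integral \<gamma> (\<lambda>z. \<Sum>k<M. F k z)) \<longlongrightarrow> contour_integral \<gamma> (\<lambda>z. th c \<tau> z * E z)) sequentially"
    using contour_integral_uniform_limit[of "\<lambda>M z. \<Sum>k<M. F k z" \<gamma> sequentially "\<lambda>z. th c \<tau> z * E z" "of_nat P"] ul lim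
    by (auto simp: \<gamma>_def intro!: always_eventually contour_integrable_sum cF[unfolded \<gamma>_def])
  moreover have "I = contour_integral \<gamma> (\<lambda>z. th c \<tau> z * E z)"
    unfolding I_def \<gamma>_def E_def ..
  ultimately have tl: "((\<lambda>M. \<Sum>k<M. contour_integral \<gamma> (F k)) \<longlongrightarrow> I) sequentially"
    by (subst (asm) contour_integral_sum) (auto simp: cF)
  define J where "J = (\<lambda>n::int. contour_integral \<gamma> (\<lambda>z. tt c \<tau> z n * E z))"
  have J: "J n = (if of_int n + c = d then of_nat P * exp (pi * \<i> * (of_real d)\<^sup>2 * \<tau>) else 0)" for n
    unfolding J_def \<gamma>_def E_def by (rule tt_exp_integral[OF cd])
  have ct: "(\<lambda>z. tt c \<tau> z n * E z) contour_integrable_on \<gamma>" for n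
    unfolding E_def \<gamma>_def tt_def
    by (intro contour_integrable_continuous_linepath continuous_intros)
  have FJ: "contour_integral \<gamma> (F k) = J (int k) + J (- int k - 1)" for k
    unfolding F_def gg_def J_def distrib_right by (rule contour_integral_add[OF ct ct])
  show ?thesis
  proof (intro conjI impI)
    assume "c = d"
    then have pk: "contour_integral \<gamma> (F k) = (if k = 0 then of_nat P * exp (pi * \<i> * (of_real d)\<^sup>2 * \<tau>) else 0)" for k
      unfolding FJ J by auto
    have "eventually (\<lambda>M. (\<Sum>k<M. contour_integral \<gamma> (F k)) = of_nat P * exp (pi * \<i> * (of_real d)\<^sup>2 * \<tau>)) sequentially"
      by (rule eventually_mono[OF eventually_ge_at_top[of "1::nat"]]) (simp add: pk sum.delta)
    then have "((\<lambda>M. \<Sum>k<M. contour_integral \<gamma> (F k)) \<longlongrightarrow> of_nat P * exp (pi * \<i> * (of_real d)\<^sup>2 * \<tau>)) sequentially"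
      by (rule tendsto_eventually)
    then show "I = of_nat P * exp (pi * \<i> * (of_real d)\<^sup>2 * \<tau>)" using tl LIMSEQ_unique by blast
  next
    assume nd: "d - c \<notin> \<int>"
    have nn: "of_int n + c \<noteq> d" for n
    proof
      assume "of_int n + c = d"
      then have "d - c = of_int n" by simp
      then show False using nd by simp
    qed
    have "contour_integral \<gamma> (F k) = 0" for k
      using nn[of "int k"] nn[of "- int k - 1"] unfolding FJ J by simp
    then have "((\<lambda>M. \<Sum>k<M. contour_integral \<gamma> (F k)) \<longlongrightarrow> 0) sequentially" by simp
    then show "I = 0" using tl LIMSEQ_unique by blast
  qed
qed

lemma T_nonzero:
  assumes tau: "Im \<tau> > 0"
  shows "\<exists>z. th 0 \<tau> z \<noteq> 0"
proof (rule ccontr)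
  assume "\<not> (\<exists>z. th 0 \<tau> z \<noteq> 0)"
  then have z: "th 0 \<tau> z = 0" for z by simp
  have "contour_integral (linepath 0 (of_nat 1)) (\<lambda>z. th 0 \<tau> z * exp (- 2 * pi * \<i> * of_real 0 * z))
      = of_nat 1 * exp (pi * \<i> * (of_real 0)\<^sup>2 * \<tau>)"
    using th_coeff[OF tau, of 1 0 0] by simp
  then show False by (simp add: z)
qed

lemma minus_half_not_int: "- (1/2 :: real) \<notin> \<int>"
proof
  assume "- (1/2 :: real) \<in> \<int>"
  then obtain m :: int where "- (1/2 :: real) = of_int m" by (auto elim: Ints_cases)
  then have "(2::real) * of_int m = -1" by simp
  then have "2 * m = -1" by linarith
  then show False by presburger
qed

lemma H_nonzero:
  assumes tau: "Im \<tau> > 0"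
  shows "\<exists>z. th (3/4) \<tau> z - th (1/4) \<tau> z \<noteq> 0"
proof (rule ccontr)
  assume "\<not> (\<exists>z. th (3/4) \<tau> z - th (1/4) \<tau> z \<noteq> 0)"
  then have z: "th (3/4) \<tau> z = th (1/4) \<tau> z" for z by simp
  have "contour_integral (linepath 0 (of_nat 4)) (\<lambda>z. th (1/4) \<tau> z * exp (- 2 * pi * \<i> * of_real (1/4) * z))
      = of_nat 4 * exp (pi * \<i> * (of_real (1/4))\<^sup>2 * \<tau>)"
    using th_coeff[OF tau, of 4 "1/4" "1/4"] by simp
  moreover have "contour_integral (linepath 0 (of_nat 4)) (\<lambda>z. th (3/4) \<tau> z * exp (- 2 * pi * \<i> * of_real (1/4) * z))
      = 0"
  proof -
    have "(3/4 - 1/4) * real 4 \<in> \<int>" by simp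
    moreover have "1/4 - 3/4 \<notin> (\<int> :: real set)" using minus_half_not_int by simp
    ultimately show ?thesis using th_coeff[OF tau, of 4 "3/4" "1/4"] by simp
  qed
  ultimately show False by (simp add: z)
qed

lemma infsum_prod:
  fixes A B :: "int \<Rightarrow> complex"
  assumes A: "(\<lambda>n. norm (A n)) summable_on UNIV" and B: "(\<lambda>n. norm (B n)) summable_on UNIV"
  shows "(\<Sum>\<^sub>\<infinity>l\<in>UNIV. A (fst l) * B (snd l)) = (\<Sum>\<^sub>\<infinity>n. A n) * (\<Sum>\<^sub>\<infinity>n. B n)"
proof -
  define f where "f = (\<lambda>l::int\<times>int. A (fst l) * B (snd l))"
  have "(\<lambda>l. norm (f l)) summable_on Sigma UNIV (\<lambda>_. UNIV)"
  proof (rule Infinite_Sum.abs_summable_on_Sigma_iff[THEN iffD2], intro conjI ballI)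
    fix x :: int
    show "(\<lambda>y. norm (f (x, y))) summable_on UNIV"
      unfolding f_def using summable_on_cmult_right[OF B, of "norm (A x)"] by (simp add: norm_mult)
  next
    have "(\<lambda>x. norm (A x) * (\<Sum>\<^sub>\<infinity>y. norm (B y))) summable_on UNIV"
      using summable_on_cmult_left[OF A] by simp
    moreover have "(\<Sum>\<^sub>\<infinity>y. norm (f (x, y))) = norm (A x) * (\<Sum>\<^sub>\<infinity>y. norm (B y))" for x
      unfolding f_def by (simp add: norm_mult infsum_cmult_right')
    ultimately show "(\<lambda>x. norm (\<Sum>\<^sub>\<infinity>y\<in>UNIV. norm (f (x, y)))) summable_on UNIV"
      by (simp add: infsum_nonneg)
  qed
  then have s: "f summable_on Sigma UNIV (\<lambda>_. UNIV)" by (rule abs_summable_summable)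
  have "(\<Sum>\<^sub>\<infinity>x. \<Sum>\<^sub>\<infinity>y. f (x, y)) = infsum f (Sigma UNIV (\<lambda>_. UNIV))"
    by (rule infsum_Sigma_banach[OF s])
  moreover have "(\<Sum>\<^sub>\<infinity>x. \<Sum>\<^sub>\<infinity>y. f (x, y)) = (\<Sum>\<^sub>\<infinity>n. A n) * (\<Sum>\<^sub>\<infinity>n. B n)"
    unfolding f_def by (simp add: infsum_cmult_right' infsum_cmult_left')
  ultimately show ?thesis by (simp add: f_def)
qed

lemma theta_char_prod:
  assumes t1: "Im \<tau>1 > 0" and t2: "Im \<tau>2 > 0"
  shows "theta_char (0, c) (0, 0) v \<tau>1 \<tau>2 = th 0 \<tau>1 (fst v) * th c \<tau>2 (snd v)"
proof -
  have "theta_char (0, c) (0, 0) v \<tau>1 \<tau>2 = (\<Sum>\<^sub>\<infinity>l\<in>UNIV. tt 0 \<tau>1 (fst v) (fst l) * tt c \<tau>2 (snd v) (snd l))"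
    unfolding theta_char_def
    apply (rule infsum_cong)
    subgoal for l
      unfolding tt_def Let_def exp_add[symmetric] by (rule arg_cong[where f=exp]) (simp add: algebra_simps)
    done
  also have "\<dots> = th 0 \<tau>1 (fst v) * th c \<tau>2 (snd v)"
    by (simp add: infsum_prod tt_abs_summable t1 t2 th_infsum)
  finally show ?thesis .
qed

lemma local_factor:
  fixes f :: "complex \<Rightarrow> complex"
  assumes hol: "f holomorphic_on UNIV" and nz: "f a \<noteq> 0"
  shows "\<exists>r g m M. r > 0 \<and> m > 0 \<and> (\<forall>w\<in>cball z r. f w = g w * (w - z) ^ nat (zorder f z) \<and> m \<le> norm (g w) \<and> norm (g w) \<le> M)"
proof -
  obtain r where r: "r > 0" "zor_poly f z holomorphic_on cball z r"
    "\<forall>w\<in>cball z r. f w = zor_poly f z w * (w - z) ^ nat (zorder f z) \<and> zor_poly f z w \<noteq> 0"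
    using zorder_exist_zero[OF hol open_UNIV connected_UNIV, of z] nz by blast
  define g where "g = zor_poly f z"
  have cont: "continuous_on (cball z r) (\<lambda>w. norm (g w))"
    using r(2) unfolding g_def by (intro continuous_intros holomorphic_on_imp_continuous_on)
  have ne: "cball z r \<noteq> {}" using r by auto
  obtain w1 where w1: "w1 \<in> cball z r" "\<forall>y\<in>cball z r. norm (g w1) \<le> norm (g y)"
    using continuous_attains_inf[OF compact_cball ne cont] by blast
  obtain w2 where w2: "w2 \<in> cball z r" "\<forall>y\<in>cball z r. norm (g y) \<le> norm (g w2)"
    using continuous_attains_sup[OF compact_cball ne cont] by blast
  have "norm (g w1) > 0" using r(3) w1(1) by (simp add: g_def)
  then show ?thesis using r w1 w2
    by (intro exI[of _ r] exI[of _ g] exI[of _ "norm (g w1)"] exI[of _ "norm (g w2)"]) (auto simp: g_def)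
qed

lemma vmult_shift: "vmult (\<lambda>v. F (v + x)) p = vmult F (p + x)"
  unfolding vmult_def by (simp add: add_ac)

lemma vmult_zero: "vmult (\<lambda>v. 0) p = \<infinity>"
proof -
  have "\<exists>C>0. \<forall>\<^sub>F h in nhds 0. norm ((0::complex)) \<le> C * norm (h::complex\<times>complex) ^ k" for k
    by (rule exI[of _ "1::real"]) simp
  then have "{enat k |k. \<exists>C>0. \<forall>\<^sub>F h in nhds 0. norm ((0::complex)) \<le> C * norm (h::complex\<times>complex) ^ k} = range enat"
    by blast
  moreover have "infinite (range enat)" by (rule range_inj_infinite) (simp add: inj_on_def)
  ultimately show ?thesis unfolding vmult_def by (simp add: Sup_enat_def)
qed

lemma vmult_prod:
  fixes f1 f2 :: "complex \<Rightarrow> complex"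
  assumes h1: "f1 holomorphic_on UNIV" and n1: "f1 a1 \<noteq> 0"
    and h2: "f2 holomorphic_on UNIV" and n2: "f2 a2 \<noteq> 0"
  shows "vmult (\<lambda>v. f1 (fst v) * f2 (snd v)) p = enat (nat (zorder f1 (fst p)) + nat (zorder f2 (snd p)))"
proof -
  define z1 z2 where "z1 = fst p" and "z2 = snd p"
  define K1 K2 where "K1 = nat (zorder f1 z1)" and "K2 = nat (zorder f2 z2)"
  obtain r1 g1 m1 M1 where R1: "r1 > 0" "m1 > 0" "\<And>w. w \<in> cball z1 r1 \<Longrightarrow> f1 w = g1 w * (w - z1) ^ K1 \<and> m1 \<le> norm (g1 w) \<and> norm (g1 w) \<le> M1"
    using local_factor[OF h1 n1, of z1] unfolding K1_def by blast
  obtain r2 g2 m2 M2 where R2: "r2 > 0" "m2 > 0" "\<And>w. w \<in> cball z2 r2 \<Longrightarrow> f2 w = g2 w * (w - z2) ^ K2 \<and> m2 \<le> norm (g2 w) \<and> norm (g2 w) \<le> M2"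
    using local_factor[OF h2 n2, of z2] unfolding K2_def by blast
  define F where "F = (\<lambda>v. f1 (fst v) * f2 (snd v))"
  define S where "S = {enat k |k. \<exists>C>0. \<forall>\<^sub>F h in nhds 0. norm (F (p + h)) \<le> C * norm h ^ k}"
  have M1: "M1 \<ge> 0" using R1(3)[of z1] R1(1) by (meson centre_in_cball less_imp_le norm_ge_zero order_trans)
  have M2: "M2 \<ge> 0" using R2(3)[of z2] R2(1) by (meson centre_in_cball less_imp_le norm_ge_zero order_trans)
  have in1: "z1 + a \<in> cball z1 r1" if "norm a \<le> r1" for a using that by (simp add: dist_norm)
  have in2: "z2 + a \<in> cball z2 r2" if "norm a \<le> r2" for a using that by (simp add: dist_norm)
  have Fh: "F (p + h) = g1 (z1 + fst h) * fst h ^ K1 * (g2 (z2 + snd h) * snd h ^ K2)"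
    if "norm (fst h) \<le> r1" "norm (snd h) \<le> r2" for h
    using R1(3)[OF in1[OF that(1)]] R2(3)[OF in2[OF that(2)]] by (simp add: F_def z1_def z2_def)
  have KS: "enat (K1 + K2) \<in> S"
  proof -
    have "\<forall>\<^sub>F h in nhds 0. norm (F (p + h)) \<le> (M1 * M2 + 1) * norm h ^ (K1 + K2)"
    proof -
      have "\<forall>\<^sub>F h in nhds (0::complex\<times>complex). dist h 0 \<le> min r1 r2"
        using R1(1) R2(1) by (auto simp: eventually_nhds_metric_le intro!: exI[of _ "min r1 r2"])
      then show ?thesis
      proof (rule eventually_mono)
        fix h :: "complex \<times> complex" assume "dist h 0 \<le> min r1 r2"
        then have nh: "norm h \<le> r1" "norm h \<le> r2" by (auto simp: dist_norm)
        have f1: "norm (fst h) \<le> norm h" using norm_fst_le[of "fst h" "snd h"] by simp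
        have f2: "norm (snd h) \<le> norm h" using norm_snd_le[of "snd h" "fst h"] by simp
        have "norm (F (p + h)) = norm (g1 (z1 + fst h)) * norm (fst h) ^ K1 * (norm (g2 (z2 + snd h)) * norm (snd h) ^ K2)"
          using Fh[of h] f1 f2 nh by (simp add: norm_mult norm_power)
        also have "\<dots> \<le> M1 * norm h ^ K1 * (M2 * norm h ^ K2)"
          using R1(3)[OF in1] R2(3)[OF in2] f1 f2 nh M1 M2
          by (intro mult_mono power_mono) auto
        also have "\<dots> \<le> (M1 * M2 + 1) * norm h ^ (K1 + K2)"
          by (simp add: power_add algebra_simps)
        finally show "norm (F (p + h)) \<le> (M1 * M2 + 1) * norm h ^ (K1 + K2)" .
      qed
    qed
    moreover have "M1 * M2 + 1 > 0" using M1 M2 by (simp add: add_nonneg_pos)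
    ultimately show ?thesis unfolding S_def by blast
  qed
  have bound: "k \<le> K1 + K2" if "enat k \<in> S" for k
  proof (rule ccontr)
    assume kK: "\<not> k \<le> K1 + K2"
    from that obtain C where C: "C > 0" "\<forall>\<^sub>F h in nhds 0. norm (F (p + h)) \<le> C * norm h ^ k"
      unfolding S_def by auto
    then obtain d where d: "d > 0" "\<And>h. dist h 0 \<le> d \<Longrightarrow> norm (F (p + h)) \<le> C * norm h ^ k"
      unfolding eventually_nhds_metric_le by blast
    define t where "t = min (min (d / 2) (min r1 r2)) (min 1 (m1 * m2 / (2 * C * 2 ^ k)))"
    have tpos: "t > 0" using d R1 R2 C by (simp add: t_def)
    have t1: "t \<le> 1" and t2: "2 * t \<le> d" and t3: "t \<le> r1" "t \<le> r2"
      and t4: "t \<le> m1 * m2 / (2 * C * 2 ^ k)" by (auto simp: t_def)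
    define h where "h = (complex_of_real t, complex_of_real t)"
    have nh: "norm h \<le> 2 * t" using norm_Pair_le[of "complex_of_real t" "complex_of_real t"] tpos
      by (simp add: h_def)
    have "dist h 0 \<le> d" using nh t2 by (simp add: dist_norm)
    then have up: "norm (F (p + h)) \<le> C * norm h ^ k" by (rule d(2))
    have "norm (F (p + h)) = norm (g1 (z1 + of_real t)) * t ^ K1 * (norm (g2 (z2 + of_real t)) * t ^ K2)"
      using Fh[of h] tpos t3 by (simp add: h_def norm_mult norm_power)
    also have "\<dots> \<ge> m1 * t ^ K1 * (m2 * t ^ K2)"
      using R1(3)[OF in1, of "complex_of_real t"] R2(3)[OF in2, of "complex_of_real t"] tpos t3 R1(2) R2(2)
      by (intro mult_mono) auto
    finally have low: "m1 * m2 * t ^ (K1 + K2) \<le> norm (F (p + h))" by (simp add: power_add algebra_simps)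
    have "C * norm h ^ k \<le> C * (2 * t) ^ k"
      using nh C(1) by (intro mult_left_mono power_mono) auto
    also have "\<dots> = C * 2 ^ k * t ^ k" by (simp add: power_mult_distrib)
    also have "t ^ k \<le> t ^ (K1 + K2 + 1)"
      using kK tpos t1 by (intro power_decreasing) auto
    then have "C * 2 ^ k * t ^ k \<le> C * 2 ^ k * t ^ (K1 + K2 + 1)"
      using C(1) by (intro mult_left_mono) auto
    finally have "m1 * m2 * t ^ (K1 + K2) \<le> (C * 2 ^ k * t) * t ^ (K1 + K2)"
      using low up by (simp add: algebra_simps)
    then have "m1 * m2 \<le> C * 2 ^ k * t" using tpos by simp
    moreover have "C * 2 ^ k * t \<le> m1 * m2 / 2"
      using t4 C(1) by (simp add: field_simps)
    ultimately show False using mult_pos_pos[OF R1(2) R2(2)] by linarith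
  qed
  have "Sup S = enat (K1 + K2)"
  proof (rule antisym)
    show "Sup S \<le> enat (K1 + K2)"
    proof (rule Sup_least)
      fix x assume "x \<in> S"
      then obtain k where "x = enat k" "enat k \<in> S" unfolding S_def by blast
      then show "x \<le> enat (K1 + K2)" using bound by simp
    qed
    show "enat (K1 + K2) \<le> Sup S" using KS by (rule Sup_upper)
  qed
  then show ?thesis unfolding vmult_def S_def F_def K1_def K2_def z1_def z2_def .
qed

lemma latt_0 [simp]: "latt P \<tau> 0"
  unfolding latt_def by (rule exI[of _ 0], rule exI[of _ 0]) simp

lemma latt_add:
  assumes "latt P \<tau> a" "latt P \<tau> b"
  shows "latt P \<tau> (a + b)"
proof -
  obtain m1 n1 m2 n2 :: int where "a = of_int m1 * of_real P + of_int n1 * \<tau>" "b = of_int m2 * of_real P + of_int n2 * \<tau>"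
    using assms unfolding latt_def by blast
  then have "a + b = of_int (m1 + m2) * of_real P + of_int (n1 + n2) * \<tau>" by (simp add: algebra_simps)
  then show ?thesis unfolding latt_def by blast
qed

lemma latt_neg:
  assumes "latt P \<tau> a"
  shows "latt P \<tau> (- a)"
proof -
  obtain m1 n1 :: int where "a = of_int m1 * of_real P + of_int n1 * \<tau>"
    using assms unfolding latt_def by blast
  then have "- a = of_int (- m1) * of_real P + of_int (- n1) * \<tau>" by (simp add: algebra_simps)
  then show ?thesis unfolding latt_def by blast
qed

lemma latt_diff: "latt P \<tau> a \<Longrightarrow> latt P \<tau> b \<Longrightarrow> latt P \<tau> (a - b)"
  using latt_add[of P \<tau> a "- b"] latt_neg[of P \<tau> b] by simp

lemma latt_intI: "latt P \<tau> (of_int m * of_real P + of_int n * \<tau>)"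
  unfolding latt_def by blast

lemma ev_nz:
  fixes f :: "complex \<Rightarrow> complex"
  assumes hol: "f holomorphic_on UNIV" and nz: "f w0 \<noteq> 0"
  shows "\<forall>\<^sub>F u in at z. f u \<noteq> 0"
proof (cases "f z = 0")
  case False
  have "isCont f z" using hol holomorphic_on_imp_continuous_on continuous_on_eq_continuous_at[OF open_UNIV] by blast
  then have "(f \<longlongrightarrow> f z) (at z)" by (simp add: isCont_def)
  then show ?thesis using False by (rule tendsto_imp_eventually_ne)
next
  case True
  obtain r where r: "0 < r" "\<And>u. u \<in> ball z r - {z} \<Longrightarrow> f u \<noteq> 0"
    using isolated_zeros[OF hol open_UNIV connected_UNIV _ True _ nz] by blast
  show ?thesis unfolding eventually_at
    by (rule exI[of _ r]) (use r in \<open>auto simp: dist_commute\<close>)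
qed

lemma int_induct_gen:
  assumes "Q (0::int)" "\<And>i. Q i \<Longrightarrow> Q (i + 1)" "\<And>i. Q i \<Longrightarrow> Q (i - 1)"
  shows "Q n"
  using int_induct[of Q 0 n] assms by blast

lemma qp_factor:
  fixes f :: "complex \<Rightarrow> complex"
  assumes per: "\<And>w. f (w + of_real P) = f w"
    and qp: "\<And>w. f (w + \<tau>) = exp (\<alpha> - c * w) * f w"
  shows "\<exists>g. g holomorphic_on UNIV \<and> (\<forall>u. g u \<noteq> 0) \<and> (\<forall>u. f (u + (of_int m * of_real P + of_int n * \<tau>)) = g u * f u)"
proof -
  have "\<exists>g. g holomorphic_on UNIV \<and> (\<forall>u. g u \<noteq> 0) \<and> (\<forall>u. f (u + of_int n * \<tau>) = g u * f u)"
  proof (induction n rule: int_induct_gen)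
    case 1 show ?case by (rule exI[of _ "\<lambda>_. 1"]) simp
  next
    case (2 i)
    then obtain g where g: "g holomorphic_on UNIV" "\<forall>u. g u \<noteq> 0" "\<forall>u. f (u + of_int i * \<tau>) = g u * f u" by blast
    have "f (u + of_int (i + 1) * \<tau>) = exp (\<alpha> - c * (u + of_int i * \<tau>)) * g u * f u" for u
      using qp[of "u + of_int i * \<tau>"] g(3) by (simp add: algebra_simps)
    then show ?case using g
      by (intro exI[of _ "\<lambda>u. exp (\<alpha> - c * (u + of_int i * \<tau>)) * g u"]) (auto intro!: holomorphic_intros)
  next
    case (3 i)
    then obtain g where g: "g holomorphic_on UNIV" "\<forall>u. g u \<noteq> 0" "\<forall>u. f (u + of_int i * \<tau>) = g u * f u" by blast
    have fv: "f v = g u / exp (\<alpha> - c * v) * f u" if v: "v = u + of_int (i - 1) * \<tau>" for u v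
    proof -
      have "v + \<tau> = u + of_int i * \<tau>" using v by (simp add: algebra_simps)
      then have "g u * f u = exp (\<alpha> - c * v) * f v" using qp[of v] g(3) by metis
      moreover have "exp (\<alpha> - c * v) \<noteq> 0" by simp
      ultimately show ?thesis by (simp add: field_simps)
    qed
    have "f (u + of_int (i - 1) * \<tau>) = g u / exp (\<alpha> - c * (u + of_int (i - 1) * \<tau>)) * f u" for u
      by (rule fv) simp
    then show ?case using g
      by (intro exI[of _ "\<lambda>u. g u / exp (\<alpha> - c * (u + of_int (i - 1) * \<tau>))"]) (auto intro!: holomorphic_intros)
  qed
  then obtain g where g: "g holomorphic_on UNIV" "\<forall>u. g u \<noteq> 0" "\<forall>u. f (u + of_int n * \<tau>) = g u * f u" by blast
  have "f (u + (of_int m * of_real P + of_int n * \<tau>)) = f (u + of_int n * \<tau>)" for u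
    using per_int[of f "of_real P", OF per, of "u + of_int n * \<tau>" m] by (simp add: algebra_simps)
  then show ?thesis using g by auto
qed

lemma shift_analytic:
  fixes g :: "complex \<Rightarrow> complex"
  assumes "g holomorphic_on UNIV"
  shows "(\<lambda>u. g (u + w)) analytic_on UNIV"
proof -
  have "(g \<circ> (\<lambda>u. u + w)) holomorphic_on UNIV"
    by (rule holomorphic_on_compose) (auto intro: holomorphic_intros holomorphic_on_subset[OF assms])
  then show ?thesis by (simp add: analytic_on_open o_def)
qed

lemma zorder_latt:
  fixes f :: "complex \<Rightarrow> complex"
  assumes hol: "f holomorphic_on UNIV" and nz: "f w0 \<noteq> 0"
    and per: "\<And>w. f (w + of_real P) = f w"
    and qp: "\<And>w. f (w + \<tau>) = exp (\<alpha> - c * w) * f w"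
    and L: "latt P \<tau> l"
  shows "zorder f (w + l) = zorder f w"
proof -
  obtain m n where l: "l = of_int m * of_real P + of_int n * \<tau>" using L by (auto simp: latt_def)
  obtain g where g: "g holomorphic_on UNIV" "\<forall>u. g u \<noteq> 0" "\<forall>u. f (u + l) = g u * f u"
    using qp_factor[OF per qp, of m n] l by blast
  have "zorder f (w + l) = zorder (\<lambda>u. f (u + (w + l))) 0" by (rule zorder_shift)
  also have "(\<lambda>u. f (u + (w + l))) = (\<lambda>u. g (u + w) * f (u + w))"
  proof (rule ext)
    fix u
    have "u + (w + l) = (u + w) + l" by (simp add: add_ac)
    then show "f (u + (w + l)) = g (u + w) * f (u + w)" using g(3) by metis
  qed
  also have "zorder (\<lambda>u. g (u + w) * f (u + w)) 0 = zorder (\<lambda>u. g (u + w)) 0 + zorder (\<lambda>u. f (u + w)) 0"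
  proof (rule zorder_times_analytic)
    show "(\<lambda>u. g (u + w)) analytic_on {0}" "(\<lambda>u. f (u + w)) analytic_on {0}"
      using shift_analytic[OF g(1), of w] shift_analytic[OF hol, of w] analytic_on_subset by blast+
    have "\<forall>\<^sub>F u in at w. f u \<noteq> 0" by (rule ev_nz[OF hol nz])
    then have "\<forall>\<^sub>F u in at 0. f (u + w) \<noteq> 0"
      by (simp add: at_to_0'[of w] eventually_filtermap add_ac)
    then show "\<forall>\<^sub>F u in at 0. g (u + w) * f (u + w) \<noteq> 0"
      by (rule eventually_mono) (use g(2) in auto)
  qed
  also have "zorder (\<lambda>u. g (u + w)) 0 = 0"
    by (rule zorder_eq_0I) (use g analytic_on_subset[OF shift_analytic[OF g(1), of w], of "{0}"] in auto)
  also have "zorder (\<lambda>u. f (u + w)) 0 = zorder f w" by (rule zorder_shift[symmetric])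
  finally show ?thesis by simp
qed

lemma zero_latt:
  fixes f :: "complex \<Rightarrow> complex"
  assumes per: "\<And>w. f (w + of_real P) = f w"
    and qp: "\<And>w. f (w + \<tau>) = exp (\<alpha> - c * w) * f w"
    and L: "latt P \<tau> l"
  shows "f (w + l) = 0 \<longleftrightarrow> f w = 0"
proof -
  obtain m n where l: "l = of_int m * of_real P + of_int n * \<tau>" using L by (auto simp: latt_def)
  obtain g where g: "\<forall>u. g u \<noteq> 0" "\<forall>u. f (u + l) = g u * f u"
    using qp_factor[OF per qp, of m n] l by blast
  then show ?thesis by simp
qed

lemma zorder_pos_entire:
  fixes f :: "complex \<Rightarrow> complex"
  assumes hol: "f holomorphic_on UNIV" and nz: "f w0 \<noteq> 0"
  shows "(f z = 0 \<longrightarrow> zorder f z > 0) \<and> (f z \<noteq> 0 \<longrightarrow> zorder f z = 0)"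
proof -
  have "\<forall>\<^sub>F u in at z. f u \<noteq> 0" by (rule ev_nz[OF hol nz])
  then have fr: "\<exists>\<^sub>F u in at z. f u \<noteq> 0" by (simp add: eventually_frequently)
  have an: "f analytic_on {z}" using hol analytic_on_open[of UNIV f] analytic_on_subset by blast
  show ?thesis using zorder_pos_iff[OF hol open_UNIV _ fr] zorder_eq_0I[OF an] by auto
qed

lemma zeros_exact:
  fixes f :: "complex \<Rightarrow> complex" and S :: "complex set"
  assumes hol: "f holomorphic_on UNIV" and P: "P > 0" and tau: "Im \<tau> > 0"
    and per: "\<And>w. f (w + of_real P) = f w"
    and qp: "\<And>w. f (w + \<tau>) = exp (\<alpha> - c * w) * f w"
    and cN: "c * of_real P = 2 * pi * \<i> * of_nat N"
    and nz: "f w0 \<noteq> 0"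
    and S: "finite S" "card S = N" "\<forall>s\<in>S. f s = 0" "\<forall>s\<in>S. \<forall>s'\<in>S. latt P \<tau> (s - s') \<longrightarrow> s = s'"
  shows "(\<forall>w. f w = 0 \<longleftrightarrow> (\<exists>s\<in>S. latt P \<tau> (w - s)))
       \<and> (\<forall>w. nat (zorder f w) = (if \<exists>s\<in>S. latt P \<tau> (w - s) then 1 else 0))"
proof -
  obtain Z where Z: "finite Z" "\<forall>z\<in>Z. f z = 0" "\<forall>w. f w = 0 \<longrightarrow> (\<exists>z\<in>Z. latt P \<tau> (w - z))"
    "\<forall>z\<in>Z. \<forall>z'\<in>Z. latt P \<tau> (z - z') \<longrightarrow> z = z'" "(\<Sum>z\<in>Z. zorder f z) = int N"
    using zero_count[OF hol P tau per qp cN nz] by blast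
  have zp: "f z = 0 \<Longrightarrow> zorder f z > 0" and z0: "f z \<noteq> 0 \<Longrightarrow> zorder f z = 0" for z
    using zorder_pos_entire[OF hol nz, of z] by auto
  have zl: "zorder f (w + l) = zorder f w" if "latt P \<tau> l" for w l
    by (rule zorder_latt[OF hol nz per qp that])
  have fl: "f (w + l) = 0 \<longleftrightarrow> f w = 0" if "latt P \<tau> l" for w l
    by (rule zero_latt[OF per qp that])
  have "\<forall>s\<in>S. \<exists>z\<in>Z. latt P \<tau> (s - z)" using S(3) Z(3) by blast
  then obtain \<phi> where \<phi>: "\<And>s. s \<in> S \<Longrightarrow> \<phi> s \<in> Z \<and> latt P \<tau> (s - \<phi> s)" by metis
  have zs: "zorder f s = zorder f (\<phi> s)" if "s \<in> S" for s
  proof -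
    have "zorder f (\<phi> s + (s - \<phi> s)) = zorder f (\<phi> s)" by (rule zl) (use \<phi>[OF that] in auto)
    then show ?thesis by simp
  qed
  have inj: "inj_on \<phi> S"
  proof (rule inj_onI)
    fix s s' assume s: "s \<in> S" "s' \<in> S" "\<phi> s = \<phi> s'"
    have a: "latt P \<tau> (s - \<phi> s)" "latt P \<tau> (s' - \<phi> s')" using \<phi> s(1,2) by auto
    have "latt P \<tau> ((s - \<phi> s) - (s' - \<phi> s'))" by (rule latt_diff[OF a])
    then have "latt P \<tau> (s - s')" using s(3) by simp
    then show "s = s'" using S(4) s by blast
  qed
  have sub: "\<phi> ` S \<subseteq> Z" using \<phi> by blast
  have sumS: "(\<Sum>s\<in>S. zorder f s) = (\<Sum>z\<in>\<phi> ` S. zorder f z)"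
    using sum.reindex[OF inj, of "zorder f"] zs by (simp add: o_def)
  have "(\<Sum>z\<in>Z. zorder f z) = (\<Sum>z\<in>\<phi> ` S. zorder f z) + (\<Sum>z\<in>Z - \<phi> ` S. zorder f z)"
    using sum.subset_diff[OF sub Z(1), of "zorder f"] by (simp add: add.commute)
  moreover have "(\<Sum>s\<in>S. zorder f s) \<ge> (\<Sum>s\<in>S. 1)"
  proof (rule sum_mono)
    fix s assume "s \<in> S"
    then have "zorder f s > 0" using zp S(3) by blast
    then show "1 \<le> zorder f s" by simp
  qed
  then have "(\<Sum>s\<in>S. zorder f s) \<ge> int N" using S(2) by simp
  moreover have "(\<Sum>z\<in>Z - \<phi> ` S. zorder f z) \<ge> 0"
  proof (rule sum_nonneg)
    fix z assume "z \<in> Z - \<phi> ` S"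
    then have "zorder f z > 0" using zp Z(2) by blast
    then show "0 \<le> zorder f z" by simp
  qed
  ultimately have eqs: "(\<Sum>s\<in>S. zorder f s) = int N" and rest: "(\<Sum>z\<in>Z - \<phi> ` S. zorder f z) = 0"
    using Z(5) sumS by linarith+
  have ZS: "Z \<subseteq> \<phi> ` S"
  proof
    fix z assume "z \<in> Z"
    show "z \<in> \<phi> ` S"
    proof (rule ccontr)
      assume "z \<notin> \<phi> ` S"
      then have "z \<in> Z - \<phi> ` S" using \<open>z \<in> Z\<close> by blast
      have nn: "0 \<le> zorder f x" if "x \<in> Z - \<phi> ` S" for x
      proof -
        have "zorder f x > 0" using zp Z(2) that by blast
        then show ?thesis by simp
      qed
      have fin: "finite (Z - \<phi> ` S)" using Z(1) by simp
      have "\<forall>x\<in>Z - \<phi> ` S. zorder f x = 0" using sum_nonneg_eq_0_iff[OF fin nn] rest by simp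
      then have "zorder f z = 0" using \<open>z \<in> Z - \<phi> ` S\<close> by blast
      moreover have "zorder f z > 0" using zp Z(2) \<open>z \<in> Z\<close> by blast
      ultimately show False by simp
    qed
  qed
  have one: "zorder f s = 1" if "s \<in> S" for s
  proof -
    have "(\<Sum>s\<in>S. zorder f s - 1) = 0" using eqs S(2) by (simp add: sum_subtractf)
    moreover have nn: "0 \<le> zorder f x - 1" if "x \<in> S" for x
    proof -
      have "zorder f x > 0" using zp S(3) that by blast
      then show ?thesis by simp
    qed
    ultimately have "\<forall>x\<in>S. zorder f x - 1 = 0" using sum_nonneg_eq_0_iff[OF S(1) nn] by simp
    then have "zorder f s - 1 = 0" using that by blast
    then show ?thesis by simp
  qed
  have char: "f w = 0 \<longleftrightarrow> (\<exists>s\<in>S. latt P \<tau> (w - s))" for w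
  proof
    assume "f w = 0"
    then obtain z where z: "z \<in> Z" "latt P \<tau> (w - z)" using Z(3) by blast
    then obtain s where s: "s \<in> S" "z = \<phi> s" using ZS by blast
    have a: "latt P \<tau> (s - \<phi> s)" using \<phi> s(1) by blast
    have "latt P \<tau> ((w - z) - (s - \<phi> s))" by (rule latt_diff[OF z(2) a])
    then show "\<exists>s\<in>S. latt P \<tau> (w - s)" using s by (auto simp: algebra_simps)
  next
    assume "\<exists>s\<in>S. latt P \<tau> (w - s)"
    then obtain s where s: "s \<in> S" "latt P \<tau> (w - s)" by blast
    have "f (s + (w - s)) = 0 \<longleftrightarrow> f s = 0" by (rule fl[OF s(2)])
    then show "f w = 0" using S(3) s by simp
  qed
  have ord: "nat (zorder f w) = (if \<exists>s\<in>S. latt P \<tau> (w - s) then 1 else 0)" for w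
  proof (cases "\<exists>s\<in>S. latt P \<tau> (w - s)")
    case True
    then obtain s where s: "s \<in> S" "latt P \<tau> (w - s)" by blast
    have "zorder f (s + (w - s)) = zorder f s" by (rule zl[OF s(2)])
    then show ?thesis using one[OF s(1)] True by simp
  next
    case False
    then have "f w \<noteq> 0" using char by blast
    then show ?thesis using z0 False by simp
  qed
  show ?thesis using char ord by blast
qed

definition HP :: "real \<Rightarrow> complex \<Rightarrow> complex set" where
  "HP P \<tau> = {of_nat a * \<tau> / 2 + of_nat b * complex_of_real P / 2 | a b :: nat. a < 2 \<and> b < 2}"

lemma HP_explicit: "HP P \<tau> = {0, of_real P / 2, \<tau> / 2, \<tau> / 2 + of_real P / 2}"
proof -
  define f where "f = (\<lambda>a b::nat. of_nat a * \<tau> / 2 + of_nat b * complex_of_real P / 2)"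
  have 1: "f a b \<in> HP P \<tau>" if "a < 2" "b < 2" for a b using that unfolding HP_def f_def by blast
  have 2: "HP P \<tau> \<subseteq> {f 0 0, f 0 1, f 1 0, f 1 1}"
    unfolding HP_def f_def by (auto simp: less_2_cases_iff)
  have "HP P \<tau> = {f 0 0, f 0 1, f 1 0, f 1 1}" using 1[of 0 0] 1[of 0 1] 1[of 1 0] 1[of 1 1] 2 by auto
  then show ?thesis by (auto simp: f_def)
qed

lemma latt_coords:
  assumes P: "P > 0" and tau: "Im \<tau> > 0"
    and L: "latt P \<tau> (of_real x * of_real P + of_real y * \<tau>)"
  shows "x \<in> \<int> \<and> y \<in> \<int>"
proof -
  obtain m n :: int where e: "of_real x * of_real P + of_real y * \<tau> = of_int m * of_real P + of_int n * \<tau>"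
    using L by (auto simp: latt_def)
  have "y * Im \<tau> = of_int n * Im \<tau>" using arg_cong[OF e, of Im] by simp
  then have y: "y = of_int n" using tau by simp
  have "x * P + y * Re \<tau> = of_int m * P + of_int n * Re \<tau>" using arg_cong[OF e, of Re] by simp
  then have "x * P = of_int m * P" using y by simp
  then have "x = of_int m" using P by simp
  then show ?thesis using y by simp
qed

lemma half_int_cases:
  fixes a :: nat and b :: nat
  assumes "a < 2" "b < 2" "(real a - real b) / 2 \<in> \<int>"
  shows "a = b"
proof -
  have "a = 0 \<or> a = 1" "b = 0 \<or> b = 1" using assms(1,2) by auto
  moreover have "(1::real) / 2 \<notin> \<int>"
  proof
    assume "(1::real) / 2 \<in> \<int>"
    then have "- ((1::real) / 2) \<in> \<int>" by (rule Ints_minus)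
    then show False using minus_half_not_int by simp
  qed
  moreover have "- (1::real) / 2 \<notin> \<int>" using minus_half_not_int by simp
  ultimately show ?thesis using assms(3) by auto
qed

lemma HP_incong:
  assumes P: "P > 0" and tau: "Im \<tau> > 0"
    and s: "s \<in> HP P \<tau>" "s' \<in> HP P \<tau>" and L: "latt P \<tau> (s - s')"
  shows "s = s'"
proof -
  obtain a b a' b' :: nat where ab: "a < 2" "b < 2" "a' < 2" "b' < 2"
    and s1: "s = of_nat a * \<tau> / 2 + of_nat b * complex_of_real P / 2"
    and s2: "s' = of_nat a' * \<tau> / 2 + of_nat b' * complex_of_real P / 2"
    using s unfolding HP_def by blast
  have e1: "complex_of_real ((real b - real b') / 2) = (of_nat b - of_nat b') / 2"
    "complex_of_real ((real a - real a') / 2) = (of_nat a - of_nat a') / 2" by simp_all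
  have "s - s' = (of_nat b - of_nat b') / 2 * of_real P + (of_nat a - of_nat a') / 2 * \<tau>"
    unfolding s1 s2 by (simp add: field_simps)
  then have "s - s' = of_real ((real b - real b') / 2) * of_real P + of_real ((real a - real a') / 2) * \<tau>"
    unfolding e1 .
  then have "(real b - real b') / 2 \<in> \<int> \<and> (real a - real a') / 2 \<in> \<int>"
    using latt_coords[OF P tau, of "(real b - real b') / 2" "(real a - real a') / 2"] L by simp
  then have "a = a'" "b = b'" using half_int_cases ab by blast+
  then show ?thesis using s1 s2 by simp
qed

lemma HP_latt2:
  assumes "s \<in> HP P \<tau>"
  shows "latt P \<tau> (2 * s)"
proof -
  obtain a b :: nat where "s = of_nat a * \<tau> / 2 + of_nat b * complex_of_real P / 2"
    using assms unfolding HP_def by blast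
  then have "2 * s = of_int (int b) * of_real P + of_int (int a) * \<tau>" by (simp add: algebra_simps)
  then show ?thesis unfolding latt_def by blast
qed

lemma HP_neg:
  assumes "s \<in> HP P \<tau>"
  shows "latt P \<tau> (w + s) \<longleftrightarrow> latt P \<tau> (w - s)"
proof -
  have 2: "latt P \<tau> (2 * s)" by (rule HP_latt2[OF assms])
  show ?thesis
  proof
    assume "latt P \<tau> (w + s)"
    from latt_diff[OF this 2] show "latt P \<tau> (w - s)" by (simp add: algebra_simps)
  next
    assume "latt P \<tau> (w - s)"
    from latt_add[OF this 2] show "latt P \<tau> (w + s)" by (simp add: algebra_simps)
  qed
qed

lemma HP_rep:
  assumes "latt P \<tau> (2 * x)"
  shows "\<exists>s\<in>HP P \<tau>. latt P \<tau> (x - s)"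
proof -
  obtain m n :: int where e: "2 * x = of_int m * of_real P + of_int n * \<tau>" using assms by (auto simp: latt_def)
  define a where "a = nat (n mod 2)"
  define b where "b = nat (m mod 2)"
  have a: "a < 2" "of_int n - (of_nat a :: complex) = 2 * of_int (n div 2)"
  proof -
    show "a < 2" unfolding a_def by simp
    have "n - int a = 2 * (n div 2)" unfolding a_def by (simp add: minus_mod_eq_mult_div)
    then show "of_int n - (of_nat a :: complex) = 2 * of_int (n div 2)"
      by (metis of_int_diff of_int_mult of_int_numeral of_int_of_nat_eq)
  qed
  have b: "b < 2" "of_int m - (of_nat b :: complex) = 2 * of_int (m div 2)"
  proof -
    show "b < 2" unfolding b_def by simp
    have "m - int b = 2 * (m div 2)" unfolding b_def by (simp add: minus_mod_eq_mult_div)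
    then show "of_int m - (of_nat b :: complex) = 2 * of_int (m div 2)"
      by (metis of_int_diff of_int_mult of_int_numeral of_int_of_nat_eq)
  qed
  define s where "s = of_nat a * \<tau> / 2 + of_nat b * complex_of_real P / 2"
  have "s \<in> HP P \<tau>" unfolding HP_def s_def using a(1) b(1) by blast
  moreover have "x - s = of_int (m div 2) * of_real P + of_int (n div 2) * \<tau>"
  proof -
    have "x = (2 * x) / 2" by simp
    also have "\<dots> = (of_int m * of_real P + of_int n * \<tau>) / 2" using e by simp
    finally have xe: "x = (of_int m * of_real P + of_int n * \<tau>) / 2" .
    have "x - s = ((of_int m - of_nat b) * of_real P + (of_int n - of_nat a) * \<tau>) / 2"
      unfolding xe s_def by (simp add: field_simps)
    also have "\<dots> = (2 * of_int (m div 2) * of_real P + 2 * of_int (n div 2) * \<tau>) / 2"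
      by (simp only: a(2) b(2))
    also have "\<dots> = of_int (m div 2) * of_real P + of_int (n div 2) * \<tau>"
      by (simp add: field_simps)
    finally show ?thesis .
  qed
  then have "latt P \<tau> (x - s)" unfolding latt_def by blast
  ultimately show ?thesis by blast
qed

lemma HP_card:
  assumes P: "P > 0" and tau: "Im \<tau> > 0"
  shows "card (HP P \<tau>) = 4"
proof -
  have "(0::complex) \<noteq> of_real P / 2" "(0::complex) \<noteq> \<tau> / 2" "(0::complex) \<noteq> \<tau> / 2 + of_real P / 2"
    "of_real P / 2 \<noteq> \<tau> / 2" "of_real P / 2 \<noteq> \<tau> / 2 + of_real P / 2" "\<tau> / 2 \<noteq> \<tau> / 2 + of_real P / 2"
    using P tau by (auto simp: complex_eq_iff)
  then show ?thesis unfolding HP_explicit by simp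
qed

lemma finite_HP [simp]: "finite (HP P \<tau>)"
  unfolding HP_explicit by simp

lemma exp_2pi_nat [simp]: "exp (2 * complex_of_real pi * \<i> * of_nat n) = 1"
  using exp_2pi_int[of "int n"] by simp

lemma th_qp: "Im \<tau> > 0 \<Longrightarrow> th c \<tau> (w + \<tau>) = exp ((- pi * \<i> * \<tau>) - (2 * pi * \<i>) * w) * th c \<tau> w"
  using th_shift_tau[of \<tau> c w] by (simp add: algebra_simps)

lemma th_per4:
  assumes tau: "Im \<tau> > 0"
  shows "th (real j / 4) \<tau> (w + 4) = th (real j / 4) \<tau> w"
proof -
  define e where "e = exp (2 * pi * \<i> * complex_of_real (real j / 4))"
  have s: "th (real j / 4) \<tau> (z + 1) = e * th (real j / 4) \<tau> z" for z
    unfolding e_def by (rule th_shift1[OF tau])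
  have "w + 4 = (((w + 1) + 1) + 1) + 1" by simp
  then have "th (real j / 4) \<tau> (w + 4) = e ^ 4 * th (real j / 4) \<tau> w"
    by (simp only: s) (simp add: power4_eq_xxxx mult_ac)
  moreover have "e ^ 4 = 1"
  proof -
    have "e ^ 4 = exp (of_nat 4 * (2 * pi * \<i> * complex_of_real (real j / 4)))"
      unfolding e_def by (rule exp_of_nat_mult[symmetric])
    also have "of_nat 4 * (2 * pi * \<i> * complex_of_real (real j / 4)) = 2 * complex_of_real pi * \<i> * of_int (int j)"
      by simp
    finally show ?thesis by simp
  qed
  ultimately show ?thesis by simp
qed

lemma T_per: "Im \<tau> > 0 \<Longrightarrow> th 0 \<tau> (w + of_real 1) = th 0 \<tau> w"
  using th_shift1[of \<tau> 0 w] by simp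

definition p0 :: "complex \<Rightarrow> complex" where "p0 \<tau> = (1 + \<tau>) / 2"

lemma T_zero:
  assumes tau: "Im \<tau> > 0"
  shows "th 0 \<tau> (p0 \<tau>) = 0"
proof -
  define u where "u = - p0 \<tau>"
  have ev: "th 0 \<tau> u = th 0 \<tau> (p0 \<tau>)" unfolding u_def using th_neg[OF tau, of 0 "p0 \<tau>"] by simp
  have "p0 \<tau> = (u + \<tau>) + 1" by (simp add: u_def p0_def field_simps)
  then have "th 0 \<tau> (p0 \<tau>) = th 0 \<tau> (u + \<tau>)" using T_per[OF tau, of "u + \<tau>"] by simp
  also have "\<dots> = exp ((- pi * \<i> * \<tau>) - (2 * pi * \<i>) * u) * th 0 \<tau> u" by (rule th_qp[OF tau])
  also have "(- pi * \<i> * \<tau>) - (2 * pi * \<i>) * u = of_real pi * \<i>"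
    by (simp add: u_def p0_def field_simps)
  finally have "th 0 \<tau> (p0 \<tau>) = - th 0 \<tau> (p0 \<tau>)" using ev by simp
  then show ?thesis by simp
qed

lemma T_ord:
  assumes tau: "Im \<tau> > 0"
  shows "(\<forall>w. th 0 \<tau> w = 0 \<longleftrightarrow> latt 1 \<tau> (w - p0 \<tau>)) \<and>
         (\<forall>w. nat (zorder (th 0 \<tau>) w) = (if latt 1 \<tau> (w - p0 \<tau>) then 1 else 0))"
proof -
  obtain w0 where w0: "th 0 \<tau> w0 \<noteq> 0" using T_nonzero[OF tau] by blast
  have "(\<forall>w. th 0 \<tau> w = 0 \<longleftrightarrow> (\<exists>s\<in>{p0 \<tau>}. latt 1 \<tau> (w - s)))
       \<and> (\<forall>w. nat (zorder (th 0 \<tau>) w) = (if \<exists>s\<in>{p0 \<tau>}. latt 1 \<tau> (w - s) then 1 else 0))"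
  proof (rule zeros_exact[where \<alpha> = "- pi * \<i> * \<tau>" and c = "2 * pi * \<i>"])
    show "th 0 \<tau> holomorphic_on UNIV" by (rule th_holo[OF tau])
    show "th 0 \<tau> (w + complex_of_real 1) = th 0 \<tau> w" for w by (rule T_per[OF tau])
    show "th 0 \<tau> (w + \<tau>) = exp (- pi * \<i> * \<tau> - 2 * pi * \<i> * w) * th 0 \<tau> w" for w by (rule th_qp[OF tau])
    show "2 * pi * \<i> * complex_of_real 1 = 2 * pi * \<i> * of_nat 1" by simp
    show "th 0 \<tau> w0 \<noteq> 0" by (rule w0)
    show "\<forall>s\<in>{p0 \<tau>}. th 0 \<tau> s = 0" using T_zero[OF tau] by simp
  qed (use tau in auto)
  then show ?thesis by simp
qed

definition Hf :: "complex \<Rightarrow> complex \<Rightarrow> complex" where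
  "Hf \<tau> w = th (3/4) \<tau> w - th (1/4) \<tau> w"

lemma Hf_alt:
  assumes tau: "Im \<tau> > 0"
  shows "Hf \<tau> w = th (1/4) \<tau> (- w) - th (1/4) \<tau> w"
proof -
  have "th (3/4) \<tau> w = th (- (1/4) + 1) \<tau> w" by simp
  also have "\<dots> = th (- (1/4)) \<tau> w" by (rule th_c1[OF tau])
  also have "\<dots> = th (1/4) \<tau> (- w)" using th_neg[OF tau, of "1/4" w] by simp
  finally show ?thesis by (simp add: Hf_def)
qed

lemma Hf_holo: "Im \<tau> > 0 \<Longrightarrow> Hf \<tau> holomorphic_on UNIV"
  unfolding Hf_def[abs_def] using th_holo by (intro holomorphic_intros) auto

lemma th14_per: "Im \<tau> > 0 \<Longrightarrow> th (1/4) \<tau> (w + 4) = th (1/4) \<tau> w"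
  using th_per4[of \<tau> 1 w] by simp
lemma th34_per: "Im \<tau> > 0 \<Longrightarrow> th (3/4) \<tau> (w + 4) = th (3/4) \<tau> w"
  using th_per4[of \<tau> 3 w] by simp

lemma Hf_per: "Im \<tau> > 0 \<Longrightarrow> Hf \<tau> (w + of_real 4) = Hf \<tau> w"
  unfolding Hf_def using th14_per th34_per by simp

lemma Hf_qp:
  assumes "Im \<tau> > 0"
  shows "Hf \<tau> (w + \<tau>) = exp ((- pi * \<i> * \<tau>) - (2 * pi * \<i>) * w) * Hf \<tau> w"
  unfolding Hf_def th_qp[OF assms] by (simp only: right_diff_distrib)

lemma Hf_zeros:
  assumes tau: "Im \<tau> > 0"
  shows "\<forall>s\<in>HP 4 \<tau>. Hf \<tau> s = 0"
proof -
  define \<theta> where "\<theta> = th (1/4) \<tau>"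
  have H: "Hf \<tau> w = \<theta> (- w) - \<theta> w" for w unfolding \<theta>_def by (rule Hf_alt[OF tau])
  have per: "\<theta> (w + 4) = \<theta> w" for w unfolding \<theta>_def by (rule th14_per[OF tau])
  have qp: "\<theta> (w + \<tau>) = exp ((- pi * \<i> * \<tau>) - (2 * pi * \<i>) * w) * \<theta> w" for w
    unfolding \<theta>_def by (rule th_qp[OF tau])
  have 1: "Hf \<tau> 0 = 0" by (simp add: H)
  have 2: "Hf \<tau> 2 = 0"
  proof -
    have "\<theta> 2 = \<theta> (-2 + 4)" by simp
    also have "\<dots> = \<theta> (-2)" by (rule per)
    finally show ?thesis by (simp add: H)
  qed
  have 3: "Hf \<tau> (\<tau> / 2) = 0"
  proof -
    have "\<theta> (\<tau> / 2) = \<theta> (- (\<tau> / 2) + \<tau>)" by simp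
    also have "\<dots> = exp ((- pi * \<i> * \<tau>) - (2 * pi * \<i>) * (- (\<tau> / 2))) * \<theta> (- (\<tau> / 2))" by (rule qp)
    also have "(- pi * \<i> * \<tau>) - (2 * pi * \<i>) * (- (\<tau> / 2)) = 0" by (simp add: field_simps)
    finally show ?thesis by (simp add: H)
  qed
  have 4: "Hf \<tau> (\<tau> / 2 + 2) = 0"
  proof -
    define u where "u = - (\<tau> / 2 + 2)"
    have "\<theta> (\<tau> / 2 + 2) = \<theta> ((u + 4) + \<tau>)" by (simp add: u_def)
    also have "\<dots> = exp ((- pi * \<i> * \<tau>) - (2 * pi * \<i>) * (u + 4)) * \<theta> (u + 4)" by (rule qp)
    also have "exp ((- pi * \<i> * \<tau>) - (2 * pi * \<i>) * (u + 4)) = 1"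
    proof -
      have "(- pi * \<i> * \<tau>) - (2 * pi * \<i>) * (u + 4) = 2 * complex_of_real pi * \<i> * of_int (-2)"
        by (simp add: u_def field_simps)
      then show ?thesis by (simp only: exp_2pi_int)
    qed
    also have "\<theta> (u + 4) = \<theta> u" by (rule per)
    finally show ?thesis by (simp add: H u_def)
  qed
  have "HP 4 \<tau> = {0, 2, \<tau> / 2, \<tau> / 2 + 2}" unfolding HP_explicit by simp
  then show ?thesis using 1 2 3 4 by simp
qed

lemma HP_incong': "P > 0 \<Longrightarrow> Im \<tau> > 0 \<Longrightarrow> \<forall>s\<in>HP P \<tau>. \<forall>s'\<in>HP P \<tau>. latt P \<tau> (s - s') \<longrightarrow> s = s'"
  using HP_incong by blast

lemma Hf_ord:
  assumes tau: "Im \<tau> > 0"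
  shows "\<forall>w. nat (zorder (Hf \<tau>) w) = (if \<exists>s\<in>HP 4 \<tau>. latt 4 \<tau> (w - s) then 1 else 0)"
proof -
  obtain w0 where w0: "Hf \<tau> w0 \<noteq> 0" using H_nonzero[OF tau] unfolding Hf_def by blast
  have "(\<forall>w. Hf \<tau> w = 0 \<longleftrightarrow> (\<exists>s\<in>HP 4 \<tau>. latt 4 \<tau> (w - s)))
       \<and> (\<forall>w. nat (zorder (Hf \<tau>) w) = (if \<exists>s\<in>HP 4 \<tau>. latt 4 \<tau> (w - s) then 1 else 0))"
  proof (rule zeros_exact[where \<alpha> = "- pi * \<i> * \<tau>" and c = "2 * pi * \<i>" and N = 4])
    show "Hf \<tau> holomorphic_on UNIV" by (rule Hf_holo[OF tau])
    show "Hf \<tau> (w + complex_of_real 4) = Hf \<tau> w" for w by (rule Hf_per[OF tau])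
    show "Hf \<tau> (w + \<tau>) = exp (- pi * \<i> * \<tau> - 2 * pi * \<i> * w) * Hf \<tau> w" for w by (rule Hf_qp[OF tau])
    show "2 * pi * \<i> * complex_of_real 4 = 2 * pi * \<i> * of_nat 4" by simp
    show "Hf \<tau> w0 \<noteq> 0" by (rule w0)
    show "\<forall>s\<in>HP 4 \<tau>. Hf \<tau> s = 0" by (rule Hf_zeros[OF tau])
    show "card (HP 4 \<tau>) = 4" by (rule HP_card) (use tau in auto)
    show "\<forall>s\<in>HP 4 \<tau>. \<forall>s'\<in>HP 4 \<tau>. latt 4 \<tau> (s - s') \<longrightarrow> s = s'" by (rule HP_incong') (use tau in auto)
  qed (use tau in auto)
  then show ?thesis by blast
qed

definition Gf :: "complex \<Rightarrow> (nat \<Rightarrow> complex) \<Rightarrow> complex \<Rightarrow> complex" where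
  "Gf \<tau> a w = (\<Sum>j<4. a j * th (real j / 4) \<tau> w)"

definition ordT :: "complex \<Rightarrow> complex \<Rightarrow> nat" where
  "ordT \<tau> z = (if latt 1 \<tau> (z - p0 \<tau>) then 1 else 0)"

definition ordH :: "complex \<Rightarrow> complex \<Rightarrow> nat" where
  "ordH \<tau> w = (if \<exists>s\<in>HP 4 \<tau>. latt 4 \<tau> (w - s) then 1 else 0)"

lemma sum4: "(\<Sum>j<4::nat. f j) = f 0 + f 1 + f 2 + (f 3 :: complex)"
  by (simp add: eval_nat_numeral)

lemma theta_section_eq:
  assumes t1: "Im \<tau>1 > 0" and t2: "Im \<tau>2 > 0"
  shows "theta_section \<tau>1 \<tau>2 a v = th 0 \<tau>1 (fst v) * Gf \<tau>2 a (snd v)"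
  unfolding theta_section_def Gf_def theta_char_prod[OF t1 t2]
  by (simp add: sum_distrib_left mult_ac)

lemma Gf_holo: "Im \<tau> > 0 \<Longrightarrow> Gf \<tau> a holomorphic_on UNIV"
  unfolding Gf_def[abs_def] using th_holo by (intro holomorphic_intros) auto

lemma zorder_shift_fun: "zorder (\<lambda>z. f (z + x)) p = zorder f (p + x)"
  using zorder_shift[of "\<lambda>z. f (z + x)" p] zorder_shift[of f "p + x"] by (simp add: add_ac)

lemma shift_holo:
  fixes f :: "complex \<Rightarrow> complex"
  assumes "f holomorphic_on UNIV"
  shows "(\<lambda>z. f (z + x)) holomorphic_on UNIV"
  using shift_analytic[OF assms, of x] analytic_imp_holomorphic by blast

lemma T_ordT: "Im \<tau> > 0 \<Longrightarrow> nat (zorder (th 0 \<tau>) z) = ordT \<tau> z"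
  using T_ord unfolding ordT_def by blast

lemma H_ordH: "Im \<tau> > 0 \<Longrightarrow> nat (zorder (Hf \<tau>) w) = ordH \<tau> w"
  using Hf_ord unfolding ordH_def by blast

lemma m_formula:
  assumes t1: "Im \<tau>1 > 0" and t2: "Im \<tau>2 > 0" and nz: "Gf \<tau>2 a w0 \<noteq> 0"
  shows "vmult (\<lambda>v. theta_section \<tau>1 \<tau>2 a (v + x)) p
       = enat (ordT \<tau>1 (fst p + fst x) + nat (zorder (Gf \<tau>2 a) (snd p + snd x)))"
proof -
  obtain z0 where z0: "th 0 \<tau>1 z0 \<noteq> 0" using T_nonzero[OF t1] by blast
  have "(\<lambda>v. theta_section \<tau>1 \<tau>2 a (v + x)) = (\<lambda>v. th 0 \<tau>1 (fst v + fst x) * Gf \<tau>2 a (snd v + snd x))"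
    by (simp add: theta_section_eq[OF t1 t2])
  moreover have "vmult (\<lambda>v. (\<lambda>z. th 0 \<tau>1 (z + fst x)) (fst v) * (\<lambda>z. Gf \<tau>2 a (z + snd x)) (snd v)) p
     = enat (nat (zorder (\<lambda>z. th 0 \<tau>1 (z + fst x)) (fst p)) + nat (zorder (\<lambda>z. Gf \<tau>2 a (z + snd x)) (snd p)))"
  proof (rule vmult_prod)
    show "(\<lambda>z. th 0 \<tau>1 (z + fst x)) holomorphic_on UNIV" by (rule shift_holo[OF th_holo[OF t1]])
    show "(\<lambda>z. Gf \<tau>2 a (z + snd x)) holomorphic_on UNIV" by (rule shift_holo[OF Gf_holo[OF t2]])
    show "th 0 \<tau>1 ((z0 - fst x) + fst x) \<noteq> 0" using z0 by simp
    show "Gf \<tau>2 a ((w0 - snd x) + snd x) \<noteq> 0" using nz by simp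
  qed
  ultimately show ?thesis by (simp add: zorder_shift_fun T_ordT[OF t1])
qed

lemma m_zero:
  assumes t1: "Im \<tau>1 > 0" and t2: "Im \<tau>2 > 0" and z: "\<forall>w. Gf \<tau>2 a w = 0"
  shows "vmult (\<lambda>v. theta_section \<tau>1 \<tau>2 a (v + x)) p = \<infinity>"
proof -
  have "(\<lambda>v. theta_section \<tau>1 \<tau>2 a (v + x)) = (\<lambda>v. 0)"
    using z by (simp add: theta_section_eq[OF t1 t2])
  then show ?thesis by (simp add: vmult_zero)
qed

lemma C_EF_fun:
  assumes t1: "Im \<tau>1 > 0" and t2: "Im \<tau>2 > 0"
  shows "(\<lambda>v. theta_char (0, 3/4) (0, 0) v \<tau>1 \<tau>2 - theta_char (0, 1/4) (0, 0) v \<tau>1 \<tau>2)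
       = (\<lambda>v. th 0 \<tau>1 (fst v) * Hf \<tau>2 (snd v))"
  by (simp add: theta_char_prod[OF t1 t2] Hf_def algebra_simps)

lemma C_EF_formula:
  assumes t1: "Im \<tau>1 > 0" and t2: "Im \<tau>2 > 0"
  shows "C_EF \<tau>1 \<tau>2 p = enat (ordT \<tau>1 (fst p) + ordH \<tau>2 (snd p))"
proof -
  obtain z0 where z0: "th 0 \<tau>1 z0 \<noteq> 0" using T_nonzero[OF t1] by blast
  obtain w0 where w0: "Hf \<tau>2 w0 \<noteq> 0" using H_nonzero[OF t2] unfolding Hf_def by blast
  have "C_EF \<tau>1 \<tau>2 p = vmult (\<lambda>v. th 0 \<tau>1 (fst v) * Hf \<tau>2 (snd v)) p"
    unfolding C_EF_def C_EF_fun[OF t1 t2] ..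
  also have "\<dots> = enat (nat (zorder (th 0 \<tau>1) (fst p)) + nat (zorder (Hf \<tau>2) (snd p)))"
    by (rule vmult_prod[OF th_holo[OF t1] z0 Hf_holo[OF t2] w0])
  finally show ?thesis by (simp add: T_ordT[OF t1] H_ordH[OF t2])
qed

lemma C_EF_section:
  assumes t1: "Im \<tau>1 > 0" and t2: "Im \<tau>2 > 0"
  shows "theta_section \<tau>1 \<tau>2 (\<lambda>j. if j = 3 then 1 else if j = 1 then -1 else 0)
       = (\<lambda>v. theta_char (0, 3/4) (0, 0) v \<tau>1 \<tau>2 - theta_char (0, 1/4) (0, 0) v \<tau>1 \<tau>2)"
  by (rule ext) (simp add: theta_section_def sum4)

lemma HP1': "HP 1 \<tau> = {of_nat a * \<tau> / 2 + of_nat b / 2 | a b :: nat. a < 2 \<and> b < 2}"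
  unfolding HP_def by simp

lemma HP4': "HP 4 \<tau> = {of_nat a * \<tau> / 2 + 2 * of_nat b | a b :: nat. a < 2 \<and> b < 2}"
  unfolding HP_def by simp

lemma two_torsion_eq: "two_torsion \<tau>1 \<tau>2 = HP 1 \<tau>1 \<times> HP 4 \<tau>2"
  unfolding two_torsion_def HP1' HP4' by blast

lemma two_torsion_E_eq: "two_torsion_E \<tau>1 = (\<lambda>e. (e, 0)) ` HP 1 \<tau>1"
  unfolding two_torsion_E_def HP1' by blast

lemma latt_2p0: "latt 1 \<tau> (2 * p0 \<tau>)"
proof -
  have "2 * p0 \<tau> = of_int 1 * complex_of_real 1 + of_int 1 * \<tau>" by (simp add: p0_def)
  then show ?thesis unfolding latt_def by blast
qed

lemma latt_iff_shift: "latt P \<tau> l \<Longrightarrow> latt P \<tau> (z + l) \<longleftrightarrow> latt P \<tau> z"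
  using latt_add latt_diff by fastforce

lemma ordT_sym:
  assumes t: "t \<in> HP 1 \<tau>"
  shows "ordT \<tau> (- z - t) = ordT \<tau> (z - t)"
proof -
  have l: "latt 1 \<tau> (2 * t + 2 * p0 \<tau>)" by (rule latt_add[OF HP_latt2[OF t] latt_2p0])
  have "latt 1 \<tau> (- z - t - p0 \<tau>) \<longleftrightarrow> latt 1 \<tau> (- z - t - p0 \<tau> + (2 * t + 2 * p0 \<tau>))"
    using latt_iff_shift[OF l] by blast
  also have "- z - t - p0 \<tau> + (2 * t + 2 * p0 \<tau>) = - (z - t - p0 \<tau>)" by (simp add: algebra_simps)
  also have "latt 1 \<tau> (- (z - t - p0 \<tau>)) \<longleftrightarrow> latt 1 \<tau> (z - t - p0 \<tau>)"
    using latt_neg[of 1 \<tau> "z - t - p0 \<tau>"] latt_neg[of 1 \<tau> "- (z - t - p0 \<tau>)"] by auto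
  finally show ?thesis unfolding ordT_def by simp
qed

lemma ordH_sym: "ordH \<tau> (- w) = ordH \<tau> w"
proof -
  have "latt 4 \<tau> (- w - s) \<longleftrightarrow> latt 4 \<tau> (w - s)" if "s \<in> HP 4 \<tau>" for s
  proof -
    have e: "- w - s = - (w + s)" by simp
    have "latt 4 \<tau> (- w - s) \<longleftrightarrow> latt 4 \<tau> (w + s)"
      unfolding e
    proof
      assume "latt 4 \<tau> (- (w + s))"
      from latt_neg[OF this] show "latt 4 \<tau> (w + s)" by (simp only: minus_minus)
    next
      assume "latt 4 \<tau> (w + s)"
      from latt_neg[OF this] show "latt 4 \<tau> (- (w + s))" .
    qed
    also have "\<dots> \<longleftrightarrow> latt 4 \<tau> (w - s)" by (rule HP_neg[OF that])
    finally show ?thesis .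
  qed
  then show ?thesis unfolding ordH_def by auto
qed

lemma ordH_HP: "s \<in> HP 4 \<tau> \<Longrightarrow> ordH \<tau> s = 1"
  unfolding ordH_def by (auto intro: bexI[of _ s])

lemma ordT_unique:
  assumes t: "Im \<tau> > 0" and y: "latt 1 \<tau> (2 * y)"
  shows "\<exists>e0\<in>HP 1 \<tau>. \<forall>e\<in>HP 1 \<tau>. latt 1 \<tau> (e - y) \<longleftrightarrow> e = e0"
proof -
  obtain e0 where e0: "e0 \<in> HP 1 \<tau>" "latt 1 \<tau> (y - e0)" using HP_rep[OF y] by blast
  have "latt 1 \<tau> (e - y) \<longleftrightarrow> e = e0" if e: "e \<in> HP 1 \<tau>" for e
  proof
    assume "latt 1 \<tau> (e - y)"
    from latt_add[OF this e0(2)] have "latt 1 \<tau> (e - e0)" by simp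
    then show "e = e0" using HP_incong[of 1 \<tau> e e0] t e e0(1) by simp
  next
    assume "e = e0"
    then show "latt 1 \<tau> (e - y)" using latt_neg[OF e0(2)] by simp
  qed
  then show ?thesis using e0(1) by blast
qed

lemma count_lemma:
  fixes A B :: "'a set" and D :: "'a \<Rightarrow> nat"
  assumes A: "finite A" "card A = 4" "e0 \<in> A" and B: "finite B" "card B = 4"
  shows "card {p \<in> A \<times> B. odd ((if fst p = e0 then 1 else 0) + D (snd p))} = 12 \<longleftrightarrow> (\<forall>f\<in>B. odd (D f))"
proof -
  define Od where "Od = {f\<in>B. odd (D f)}"
  have S: "{p \<in> A \<times> B. odd ((if fst p = e0 then 1 else 0) + D (snd p))} = (A - {e0}) \<times> Od \<union> {e0} \<times> (B - Od)"
    using A(3) by (auto simp: Od_def)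
  have fO: "finite Od" "Od \<subseteq> B" using B by (auto simp: Od_def)
  have cO: "card Od \<le> 4" using card_mono[OF B(1) fO(2)] B(2) by simp
  have "card ((A - {e0}) \<times> Od \<union> {e0} \<times> (B - Od)) = card ((A - {e0}) \<times> Od) + card ({e0} \<times> (B - Od))"
    by (rule card_Un_disjoint) (use A B fO in auto)
  also have "\<dots> = 3 * card Od + (4 - card Od)"
    using A B fO by (simp add: card_cartesian_product card_Diff_subset)
  finally have c: "card {p \<in> A \<times> B. odd ((if fst p = e0 then 1 else 0) + D (snd p))} = 3 * card Od + (4 - card Od)"
    using S by simp
  show ?thesis
  proof
    assume "card {p \<in> A \<times> B. odd ((if fst p = e0 then 1 else 0) + D (snd p))} = 12"
    then have "card Od = 4" using c cO by linarith
    then have "Od = B" using card_subset_eq[OF B(1) fO(2)] B(2) by simp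
    then show "\<forall>f\<in>B. odd (D f)" by (auto simp: Od_def)
  next
    assume "\<forall>f\<in>B. odd (D f)"
    then have "Od = B" by (auto simp: Od_def)
    then show "card {p \<in> A \<times> B. odd ((if fst p = e0 then 1 else 0) + D (snd p))} = 12"
      using c B(2) by simp
  qed
qed

lemma odd_mult_enat [simp]: "odd_mult (enat k) \<longleftrightarrow> odd k"
  by (simp add: odd_mult_def)

lemma odd_mult_infty [simp]: "\<not> odd_mult \<infinity>"
  by (simp add: odd_mult_def)

definition mt :: "complex \<Rightarrow> complex \<Rightarrow> complex \<Rightarrow> complex \<times> complex \<Rightarrow> enat" where
  "mt \<tau>1 \<tau>2 t1 = (\<lambda>p. C_EF \<tau>1 \<tau>2 (p - (t1, 0)))"

lemma mt_formula:
  assumes t1: "Im \<tau>1 > 0" and t2: "Im \<tau>2 > 0"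
  shows "mt \<tau>1 \<tau>2 t p = enat (ordT \<tau>1 (fst p - t) + ordH \<tau>2 (snd p))"
  unfolding mt_def C_EF_formula[OF t1 t2] by simp

lemma mt_in_sym:
  assumes t1: "Im \<tau>1 > 0" and t2: "Im \<tau>2 > 0" and t: "t \<in> HP 1 \<tau>1"
  shows "mt \<tau>1 \<tau>2 t \<in> sym_curves \<tau>1 \<tau>2"
proof -
  define a0 :: "nat \<Rightarrow> complex" where "a0 = (\<lambda>j. if j = 3 then 1 else if j = 1 then -1 else 0)"
  have ex: "\<exists>j<4. a0 j \<noteq> 0" by (rule exI[of _ 3]) (simp add: a0_def)
  have eq: "mt \<tau>1 \<tau>2 t = vmult (\<lambda>v. theta_section \<tau>1 \<tau>2 a0 (v + (- (t, 0))))"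
  proof (rule ext)
    fix p
    have "vmult (\<lambda>v. theta_section \<tau>1 \<tau>2 a0 (v + (- (t, 0)))) p = vmult (theta_section \<tau>1 \<tau>2 a0) (p + (- (t, 0)))"
      by (rule vmult_shift)
    also have "p + (- (t, 0)) = p - (t, 0)" by simp
    also have "vmult (theta_section \<tau>1 \<tau>2 a0) (p - (t, 0)) = C_EF \<tau>1 \<tau>2 (p - (t, 0))"
      unfolding C_EF_def a0_def C_EF_section[OF t1 t2] ..
    finally show "mt \<tau>1 \<tau>2 t p = vmult (\<lambda>v. theta_section \<tau>1 \<tau>2 a0 (v + (- (t, 0)))) p"
      by (simp add: mt_def)
  qed
  have sym: "mt \<tau>1 \<tau>2 t (- p) = mt \<tau>1 \<tau>2 t p" for p
    unfolding mt_formula[OF t1 t2] using ordT_sym[OF t, of "fst p"] ordH_sym[of \<tau>2 "snd p"] by simp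
  show ?thesis unfolding sym_curves_def using ex eq sym by blast
qed

lemma mt_count:
  assumes t1: "Im \<tau>1 > 0" and t2: "Im \<tau>2 > 0" and t: "t \<in> HP 1 \<tau>1"
  shows "card {p \<in> two_torsion \<tau>1 \<tau>2. odd_mult (mt \<tau>1 \<tau>2 t p)} = 12"
proof -
  have "latt 1 \<tau>1 (2 * (t + p0 \<tau>1))"
    using latt_add[OF HP_latt2[OF t] latt_2p0[of \<tau>1]] by (simp add: algebra_simps)
  then obtain e0 where e0: "e0 \<in> HP 1 \<tau>1" "\<forall>e\<in>HP 1 \<tau>1. latt 1 \<tau>1 (e - (t + p0 \<tau>1)) \<longleftrightarrow> e = e0"
    using ordT_unique[OF t1] by blast
  have "{p \<in> two_torsion \<tau>1 \<tau>2. odd_mult (mt \<tau>1 \<tau>2 t p)}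
      = {p \<in> HP 1 \<tau>1 \<times> HP 4 \<tau>2. odd ((if fst p = e0 then 1 else 0) + (\<lambda>_. 1::nat) (snd p))}"
  proof (unfold two_torsion_eq, rule Collect_cong, rule conj_cong)
    fix p :: "complex \<times> complex"
    assume p: "p \<in> HP 1 \<tau>1 \<times> HP 4 \<tau>2"
    have "ordT \<tau>1 (fst p - t) = (if fst p = e0 then 1 else 0)"
      using e0(2) p unfolding ordT_def by (auto simp: algebra_simps)
    moreover have "ordH \<tau>2 (snd p) = 1" using ordH_HP p by auto
    ultimately show "odd_mult (mt \<tau>1 \<tau>2 t p) = odd ((if fst p = e0 then 1 else 0) + (\<lambda>_. 1::nat) (snd p))"
      by (simp add: mt_formula[OF t1 t2])
  qed simp
  also have "card \<dots> = 12"
    by (subst count_lemma) (use e0 HP_card[of 1 \<tau>1] HP_card[of 4 \<tau>2] t1 t2 in auto)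
  finally show ?thesis .
qed

lemma mt_inj:
  assumes t1: "Im \<tau>1 > 0" and t2: "Im \<tau>2 > 0"
  shows "inj_on (mt \<tau>1 \<tau>2) (HP 1 \<tau>1)"
proof (rule inj_onI)
  fix t t' assume t: "t \<in> HP 1 \<tau>1" "t' \<in> HP 1 \<tau>1" and eq: "mt \<tau>1 \<tau>2 t = mt \<tau>1 \<tau>2 t'"
  show "t = t'"
  proof (rule ccontr)
    assume ne: "t \<noteq> t'"
    define p where "p = (t + p0 \<tau>1, 0::complex)"
    have "ordT \<tau>1 (fst p - t) = 1" by (simp add: p_def ordT_def)
    moreover have "ordT \<tau>1 (fst p - t') = 0"
    proof -
      have "\<not> latt 1 \<tau>1 (t - t')" using HP_incong[of 1 \<tau>1 t t'] t t1 ne by auto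
      then show ?thesis by (simp add: p_def ordT_def algebra_simps)
    qed
    moreover have "mt \<tau>1 \<tau>2 t p = mt \<tau>1 \<tau>2 t' p" using eq by simp
    ultimately show False by (simp add: mt_formula[OF t1 t2])
  qed
qed

lemma quarter_not_int: "(1/4 :: real) \<notin> \<int>"
proof
  assume "(1/4 :: real) \<in> \<int>"
  then obtain m :: int where "(1/4 :: real) = of_int m" by (auto elim: Ints_cases)
  then have "(4::real) * of_int m = 1" by simp
  then have "4 * m = 1" by linarith
  then show False by presburger
qed

lemma half_not_int: "(1/2 :: real) \<notin> \<int>"
proof
  assume "(1/2 :: real) \<in> \<int>"
  then have "- (1/2 :: real) \<in> \<int>" by (rule Ints_minus)
  then show False using minus_half_not_int by simp
qed

lemma not_latt_tau_frac:
  assumes t: "Im \<tau> > 0" and y: "y \<notin> \<int>"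
  shows "\<not> latt 1 \<tau> (of_real y * \<tau>)"
proof
  assume "latt 1 \<tau> (of_real y * \<tau>)"
  then have "latt 1 \<tau> (of_real 0 * of_real 1 + of_real y * \<tau>)" by simp
  then show False using latt_coords[of 1 \<tau> 0 y] t y by simp
qed

lemma Gf_per4: "Im \<tau> > 0 \<Longrightarrow> Gf \<tau> a (w + 4) = Gf \<tau> a w"
  unfolding Gf_def using th_per4 by simp

lemma Gf_qp:
  assumes "Im \<tau> > 0"
  shows "Gf \<tau> a (w + \<tau>) = exp ((- pi * \<i> * \<tau>) - (2 * pi * \<i>) * w) * Gf \<tau> a w"
  unfolding Gf_def th_qp[OF assms] by (simp add: sum_distrib_left mult_ac)

lemma claimB:
  assumes t1: "Im \<tau>1 > 0" and t2: "Im \<tau>2 > 0"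
    and m: "m \<in> sym_curves \<tau>1 \<tau>2"
    and c12: "card {p \<in> two_torsion \<tau>1 \<tau>2. odd_mult (m p)} = 12"
  shows "\<exists>t\<in>HP 1 \<tau>1. m = mt \<tau>1 \<tau>2 t"
proof -
  obtain a x where mdef: "m = vmult (\<lambda>v. theta_section \<tau>1 \<tau>2 a (v + x))"
    and sym: "\<And>p. m (- p) = m p"
    using m unfolding sym_curves_def by blast
  have "\<exists>w0. Gf \<tau>2 a w0 \<noteq> 0"
  proof (rule ccontr)
    assume "\<not> (\<exists>w0. Gf \<tau>2 a w0 \<noteq> 0)"
    then have "\<forall>w. Gf \<tau>2 a w = 0" by simp
    then have "m p = \<infinity>" for p unfolding mdef by (rule m_zero[OF t1 t2])
    then have e: "{p \<in> two_torsion \<tau>1 \<tau>2. odd_mult (m p)} = {}" by simp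
    show False using c12 unfolding e by simp
  qed
  then obtain w0 where w0: "Gf \<tau>2 a w0 \<noteq> 0" by blast
  define x1 x2 where "x1 = fst x" and "x2 = snd x"
  define D where "D = (\<lambda>w. nat (zorder (Gf \<tau>2 a) (w + x2)))"
  have mf: "m p = enat (ordT \<tau>1 (fst p + x1) + D (snd p))" for p
    unfolding mdef D_def x1_def x2_def by (rule m_formula[OF t1 t2 w0])
  have Gz: "zorder (Gf \<tau>2 a) w0 = 0"
    using zorder_pos_entire[OF Gf_holo[OF t2] w0, of w0] w0 by simp
  define w1 where "w1 = w0 - x2"
  have Dw1: "D w1 = 0" unfolding D_def w1_def using Gz by simp
  define K where "K = 2 * x1 - 2 * p0 \<tau>1"
  define e0 where "e0 = p0 \<tau>1 - x1"
  have nq: "\<not> latt 1 \<tau>1 (of_real (1/4) * \<tau>1)" "\<not> latt 1 \<tau>1 (of_real (1/2) * \<tau>1)"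
    using not_latt_tau_frac[OF t1] quarter_not_int half_not_int by blast+
  obtain u where u: "\<not> latt 1 \<tau>1 u" "\<not> latt 1 \<tau>1 (K - u)"
  proof (cases "latt 1 \<tau>1 (K - of_real (1/4) * \<tau>1)")
    case True
    have "\<not> latt 1 \<tau>1 (K - of_real (1/2) * \<tau>1)"
    proof
      assume "latt 1 \<tau>1 (K - of_real (1/2) * \<tau>1)"
      from latt_diff[OF True this] have "latt 1 \<tau>1 (of_real (1/4) * \<tau>1)"
        by (simp add: algebra_simps)
      then show False using nq by simp
    qed
    then show ?thesis using that nq by blast
  next
    case False then show ?thesis using that nq by blast
  qed
  have oT: "ordT \<tau>1 z = (if latt 1 \<tau>1 (z - p0 \<tau>1) then 1 else 0)" for z by (simp add: ordT_def)
  have Dmw1: "D (- w1) = 0"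
  proof -
    define p where "p = (e0 + u, w1)"
    have "m p = enat 0"
    proof -
      have eq: "e0 + u + x1 - p0 \<tau>1 = u" by (simp add: e0_def)
      show ?thesis unfolding mf p_def fst_conv snd_conv oT eq using u(1) Dw1 by simp
    qed
    moreover have "m (- p) = enat (D (- w1))"
    proof -
      have eq: "- (e0 + u) + x1 - p0 \<tau>1 = K - u" by (simp add: e0_def K_def algebra_simps)
      have np: "- p = (- (e0 + u), - w1)" by (simp add: p_def)
      show ?thesis unfolding mf np fst_conv snd_conv oT eq using u(2) by simp
    qed
    ultimately show ?thesis using sym[of p] by simp
  qed
  have lK: "latt 1 \<tau>1 K"
  proof -
    define p where "p = (e0, w1)"
    have eq: "e0 + x1 - p0 \<tau>1 = 0" by (simp add: e0_def)
    have "m p = enat 1" unfolding mf p_def fst_conv snd_conv oT eq using Dw1 by simp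
    moreover have np: "- p = (- e0, - w1)" by (simp add: p_def)
    have "m (- p) = enat (ordT \<tau>1 (- e0 + x1))" unfolding mf np fst_conv snd_conv using Dmw1 by simp
    ultimately have "ordT \<tau>1 (- e0 + x1) = 1" using sym[of p] by simp
    then have "latt 1 \<tau>1 (- e0 + x1 - p0 \<tau>1)" by (simp add: oT split: if_splits)
    moreover have "- e0 + x1 - p0 \<tau>1 = K" by (simp add: e0_def K_def algebra_simps)
    ultimately show ?thesis by simp
  qed
  have l2x: "latt 1 \<tau>1 (2 * x1)"
    using latt_add[OF lK latt_2p0[of \<tau>1]] by (simp add: K_def)
  obtain t where t: "t \<in> HP 1 \<tau>1" "latt 1 \<tau>1 (- x1 - t)"
    using HP_rep[of 1 \<tau>1 "- x1"] latt_neg[OF l2x] by auto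
  have oTt: "ordT \<tau>1 (z + x1) = ordT \<tau>1 (z - t)" for z
  proof -
    have l: "latt 1 \<tau>1 (x1 + t)" using latt_neg[OF t(2)] by (simp add: add.commute)
    have "latt 1 \<tau>1 (z - t - p0 \<tau>1 + (x1 + t)) \<longleftrightarrow> latt 1 \<tau>1 (z - t - p0 \<tau>1)"
      by (rule latt_iff_shift[OF l])
    moreover have "z - t - p0 \<tau>1 + (x1 + t) = z + x1 - p0 \<tau>1" by (simp add: algebra_simps)
    ultimately show ?thesis by (simp add: oT)
  qed
  have l2e: "latt 1 \<tau>1 (2 * (p0 \<tau>1 - x1))"
    using latt_diff[OF latt_2p0[of \<tau>1] l2x] by (simp add: algebra_simps)
  obtain es where es: "es \<in> HP 1 \<tau>1" "\<forall>e\<in>HP 1 \<tau>1. latt 1 \<tau>1 (e - (p0 \<tau>1 - x1)) \<longleftrightarrow> e = es"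
    using ordT_unique[OF t1 l2e] by blast
  have "{p \<in> two_torsion \<tau>1 \<tau>2. odd_mult (m p)}
      = {p \<in> HP 1 \<tau>1 \<times> HP 4 \<tau>2. odd ((if fst p = es then 1 else 0) + D (snd p))}"
  proof (unfold two_torsion_eq, rule Collect_cong, rule conj_cong)
    fix p :: "complex \<times> complex"
    assume p: "p \<in> HP 1 \<tau>1 \<times> HP 4 \<tau>2"
    have "ordT \<tau>1 (fst p + x1) = (if fst p = es then 1 else 0)"
      using es(2) p unfolding ordT_def by (auto simp: algebra_simps)
    then show "odd_mult (m p) = odd ((if fst p = es then 1 else 0) + D (snd p))"
      by (simp add: mf)
  qed simp
  then have "card {p \<in> HP 1 \<tau>1 \<times> HP 4 \<tau>2. odd ((if fst p = es then 1 else 0) + D (snd p))} = 12"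
    using c12 by simp
  then have oddD: "\<forall>f\<in>HP 4 \<tau>2. odd (D f)"
    by (subst (asm) count_lemma) (use es HP_card[of 1 \<tau>1] HP_card[of 4 \<tau>2] t1 t2 in auto)
  define g where "g = (\<lambda>w. Gf \<tau>2 a (w + x2))"
  have gz: "\<forall>s\<in>HP 4 \<tau>2. g s = 0"
  proof
    fix s assume s: "s \<in> HP 4 \<tau>2"
    show "g s = 0"
    proof (rule ccontr)
      assume "g s \<noteq> 0"
      then have "zorder (Gf \<tau>2 a) (s + x2) = 0"
        using zorder_pos_entire[OF Gf_holo[OF t2] w0, of "s + x2"] by (simp add: g_def)
      then have "D s = 0" by (simp add: D_def)
      then show False using oddD s by fastforce
    qed
  qed
  have gex: "(\<forall>w. g w = 0 \<longleftrightarrow> (\<exists>s\<in>HP 4 \<tau>2. latt 4 \<tau>2 (w - s)))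
       \<and> (\<forall>w. nat (zorder g w) = (if \<exists>s\<in>HP 4 \<tau>2. latt 4 \<tau>2 (w - s) then 1 else 0))"
  proof (rule zeros_exact[where \<alpha> = "- pi * \<i> * \<tau>2 - 2 * pi * \<i> * x2" and c = "2 * pi * \<i>" and N = 4])
    show "g holomorphic_on UNIV" unfolding g_def by (rule shift_holo[OF Gf_holo[OF t2]])
    show "g (w + complex_of_real 4) = g w" for w
      unfolding g_def using Gf_per4[OF t2, of a "w + x2"] by (simp add: add_ac)
    show "g (w + \<tau>2) = exp (- pi * \<i> * \<tau>2 - 2 * pi * \<i> * x2 - 2 * pi * \<i> * w) * g w" for w
    proof -
      have "g (w + \<tau>2) = Gf \<tau>2 a ((w + x2) + \<tau>2)" by (simp add: g_def add_ac)
      also have "\<dots> = exp ((- pi * \<i> * \<tau>2) - (2 * pi * \<i>) * (w + x2)) * g w"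
        unfolding Gf_qp[OF t2] g_def ..
      also have "(- pi * \<i> * \<tau>2) - (2 * pi * \<i>) * (w + x2) = - pi * \<i> * \<tau>2 - 2 * pi * \<i> * x2 - 2 * pi * \<i> * w"
        by (simp add: algebra_simps)
      finally show ?thesis .
    qed
    show "2 * pi * \<i> * complex_of_real 4 = 2 * pi * \<i> * of_nat 4" by simp
    show "g w1 \<noteq> 0" using w0 by (simp add: g_def w1_def)
    show "\<forall>s\<in>HP 4 \<tau>2. g s = 0" by (rule gz)
    show "card (HP 4 \<tau>2) = 4" by (rule HP_card) (use t2 in auto)
    show "\<forall>s\<in>HP 4 \<tau>2. \<forall>s'\<in>HP 4 \<tau>2. latt 4 \<tau>2 (s - s') \<longrightarrow> s = s'" by (rule HP_incong') (use t2 in auto)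
  qed (use t2 in auto)
  have DH: "D w = ordH \<tau>2 w" for w
    using gex unfolding D_def ordH_def g_def zorder_shift_fun by simp
  have "m = mt \<tau>1 \<tau>2 t"
    by (rule ext) (simp add: mf mt_formula[OF t1 t2] oTt DH)
  then show ?thesis using t(1) by blast
qed

theorem lemma3p6:
  fixes tau1 tau2 :: complex
  assumes "Im tau1 > 0" and "Im tau2 > 0"
  shows "card {m \<in> sym_curves tau1 tau2.
                card {p \<in> two_torsion tau1 tau2. odd_mult (m p)} = 12} = 4
       \<and> (\<forall>m \<in> sym_curves tau1 tau2.
             card {p \<in> two_torsion tau1 tau2. odd_mult (m p)} = 12 \<longrightarrow>
             (\<exists>t \<in> two_torsion_E tau1. m = (\<lambda>p. C_EF tau1 tau2 (p - t))))"
proof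
  have S: "{m \<in> sym_curves tau1 tau2. card {p \<in> two_torsion tau1 tau2. odd_mult (m p)} = 12}
      = mt tau1 tau2 ` HP 1 tau1"
  proof
    show "{m \<in> sym_curves tau1 tau2. card {p \<in> two_torsion tau1 tau2. odd_mult (m p)} = 12} \<subseteq> mt tau1 tau2 ` HP 1 tau1"
      using claimB[OF assms] by blast
    show "mt tau1 tau2 ` HP 1 tau1 \<subseteq> {m \<in> sym_curves tau1 tau2. card {p \<in> two_torsion tau1 tau2. odd_mult (m p)} = 12}"
      using mt_in_sym[OF assms] mt_count[OF assms] by blast
  qed
  show "card {m \<in> sym_curves tau1 tau2. card {p \<in> two_torsion tau1 tau2. odd_mult (m p)} = 12} = 4"
    unfolding S using card_image[OF mt_inj[OF assms]] HP_card[of 1 tau1] assms by simp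
  show "\<forall>m \<in> sym_curves tau1 tau2.
             card {p \<in> two_torsion tau1 tau2. odd_mult (m p)} = 12 \<longrightarrow>
             (\<exists>t \<in> two_torsion_E tau1. m = (\<lambda>p. C_EF tau1 tau2 (p - t)))"
  proof (intro ballI impI)
    fix m assume "m \<in> sym_curves tau1 tau2" "card {p \<in> two_torsion tau1 tau2. odd_mult (m p)} = 12"
    then obtain t where t: "t \<in> HP 1 tau1" "m = mt tau1 tau2 t" using claimB[OF assms] by blast
    have "(t, 0) \<in> two_torsion_E tau1" using t(1) by (simp add: two_torsion_E_eq)
    moreover have "m = (\<lambda>p. C_EF tau1 tau2 (p - (t, 0)))" using t(2) by (simp add: mt_def)
    ultimately show "\<exists>t \<in> two_torsion_E tau1. m = (\<lambda>p. C_EF tau1 tau2 (p - t))" by blast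
  qed
qed

end
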